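(* Assume the setting described in the context, with $0<\alpha\le m(\lambda-2)/2$. Let $R\in\mathcal{D}$ be a good cube and $i\ge r+1$ an integer with $R^{(i)}\subset Q^*$. Then for every $(x,t)\in W_R$, $$\left(\int_{\mathbb{R}^n}\big|\theta_t(\mathbf{1}_{(R^{(i-1)})^c}\,b_{(R^{(i)})^a})(y)\big|^2\Big(\frac{t}{t+|x-y|}\Big)^{m\lambda}\frac{d\mu(y)}{t^m}\right)^{1/2}\le C\,2^{-\alpha i/2},$$ where $C$ is independent of $R,i,x,t$.
   Context: Measure and kernel: $n\ge1$, $m>0$; $\mu$ is a Borel measure on $\mathbb{R}^n$ with $\mu(B(x,r))\le C r^m$ for all $x$, $r>0$; distances, balls and cubes use the $\ell^\infty$ metric $|x-y|=\max_i|x_i-y_i|$. Fix $\lambda>2$ and $\alpha>0$. The kernel $s_t:\mathbb{R}^n\times\mathbb{R}^n\to\mathbb{C}$ ($t>0$) satisfies $|s_t(x,y)|\le C t^\alpha/(t+|x-y|)^{m+\alpha}$ and $|s_t(x,y)-s_t(x,y')|\le C|y-y'|^\alpha/(t+|x-y|)^{m+\alpha}$ whenever $|y-y'|<t/2$; $\theta_t f(y)=\int s_t(y,z)f(z)\,d\mu(z)$. Dyadic grid: for a fixed sequence $\beta=(\beta_j)_{j\in\mathbb{Z}}$, $\beta_j\in\{0,1\}^n$, let $\mathcal{D}=\bigcup_{k\in\mathbb{Z}}\mathcal{D}_k$, $\mathcal{D}_k=\{2^k([0,1)^n+v)+\sum_{j<k}2^j\beta_j: v\in\mathbb{Z}^n\}$.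 For $Q\in\mathcal{D}$, $\ell(Q)$ is its side length and $Q^{(k)}$ the unique cube of $\mathcal{D}$ with $\ell(Q^{(k)})=2^k\ell(Q)$ and $Q\subset Q^{(k)}$. Fix an integer $r\ge1$ and $\gamma\in(0,1/2)$ with $\gamma\le \frac{\alpha}{2(m+\alpha)}$ and $\frac{m\gamma}{1-\gamma}\le\frac{\alpha}{4}$. A cube $I\in\mathcal{D}$ is bad if there is $J\in\mathcal{D}$ with $\ell(J)\ge 2^r\ell(I)$ and $\operatorname{dist}(I,\partial J)\le\ell(I)^\gamma\ell(J)^{1-\gamma}$; otherwise it is good. $W_R=R\times(\ell(R)/2,\ell(R)]$. Testing functions and stopping cubes: let $1<p\le2$, $p'=p/(p-1)$. For each cube $Q$ let $b_Q$ satisfy $\operatorname{supp}b_Q\subset Q$, $\langle b_Q\rangle_Q=1$ and $\|b_Q\|^p_{L^p(\mu)}\le A\mu(Q)$, where $\langle h\rangle_Q=\mu(Q)^{-1}\int_Q h\,d\mu$ and $A$ is a fixed constant. Fix $s\in\mathbb{Z}$ and $Q^*\in\mathcal{D}$ with $\ell(Q^* )=2^s$. Stopping cubes: $\mathcal{F}^0=\{Q^*\}$; given $\mathcal{F}^j$, $\mathcal{F}^{j+1}$ consists, for each $F\in\mathcal{F}^j$, of the maximal cubes $Q\in\mathcal{D}$, $Q\subsetneq F$, with $|\langle b_F\rangle_Q|<1/2$ or $\langle|b_F|^p\rangle_Q>2^{p'+1}A^{p'}$; $\mathcal{F}_{Q^*}=\bigcup_j\mathcal{F}^j$. For $Q\in\mathcal{D}$,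 $Q\subset Q^*$, $Q^a$ is the minimal $F\in\mathcal{F}_{Q^*}$ with $Q\subset F$. *)

theory Defs
  imports "HOL-Analysis.Analysis"
begin

definition linf_dist :: "real^'n \<Rightarrow> real^'n \<Rightarrow> real" where
  "linf_dist x y = (MAX i\<in>UNIV. \<bar>x$i - y$i\<bar>)"

definition linf_ball :: "real^'n \<Rightarrow> real \<Rightarrow> (real^'n) set" where
  "linf_ball x r = {y. linf_dist x y < r}"

definition linf_setdist :: "(real^'n) set \<Rightarrow> (real^'n) set \<Rightarrow> real" where
  "linf_setdist A B = Inf {linf_dist a b | a b. a \<in> A \<and> b \<in> B}"

text \<open>shift vector  sum_{j<k} 2^j beta_j  (component i)\<close>
definition dy_shift :: "(int \<Rightarrow> real^'n) \<Rightarrow> int \<Rightarrow> 'n \<Rightarrow> real" where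
  "dy_shift \<beta> k i = (\<Sum>l. 2 powr (real_of_int (k - 1 - int l)) * (\<beta> (k - 1 - int l) $ i))"

definition dy_cube :: "(int \<Rightarrow> real^'n) \<Rightarrow> int \<Rightarrow> int^'n \<Rightarrow> (real^'n) set" where
  "dy_cube \<beta> k v = {x. \<forall>i. 2 powr (real_of_int k) * real_of_int (v$i) + dy_shift \<beta> k i \<le> x$i
                          \<and> x$i < 2 powr (real_of_int k) * (real_of_int (v$i) + 1) + dy_shift \<beta> k i}"

definition dy_level_grid :: "(int \<Rightarrow> real^'n) \<Rightarrow> int \<Rightarrow> (real^'n) set set" where
  "dy_level_grid \<beta> k = range (dy_cube \<beta> k)"

definition dy_grid :: "(int \<Rightarrow> real^'n) \<Rightarrow> (real^'n) set set" where
  "dy_grid \<beta> = (\<Union>k. dy_level_grid \<beta> k)"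

definition dy_level :: "(int \<Rightarrow> real^'n) \<Rightarrow> (real^'n) set \<Rightarrow> int" where
  "dy_level \<beta> Q = (THE k. Q \<in> dy_level_grid \<beta> k)"

definition side :: "(int \<Rightarrow> real^'n) \<Rightarrow> (real^'n) set \<Rightarrow> real" where
  "side \<beta> Q = 2 powr (real_of_int (dy_level \<beta> Q))"

definition dy_anc :: "(int \<Rightarrow> real^'n) \<Rightarrow> (real^'n) set \<Rightarrow> nat \<Rightarrow> (real^'n) set" where
  "dy_anc \<beta> Q k = (THE P. P \<in> dy_level_grid \<beta> (dy_level \<beta> Q + int k) \<and> Q \<subseteq> P)"

definition dy_bad :: "(int \<Rightarrow> real^'n) \<Rightarrow> nat \<Rightarrow> real \<Rightarrow> (real^'n) set \<Rightarrow> bool" where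
  "dy_bad \<beta> r \<gamma> I \<longleftrightarrow> (\<exists>J\<in>dy_grid \<beta>. side \<beta> J \<ge> 2 ^ r * side \<beta> I \<and>
      linf_setdist I (frontier J) \<le> side \<beta> I powr \<gamma> * side \<beta> J powr (1 - \<gamma>))"

definition dy_good :: "(int \<Rightarrow> real^'n) \<Rightarrow> nat \<Rightarrow> real \<Rightarrow> (real^'n) set \<Rightarrow> bool" where
  "dy_good \<beta> r \<gamma> I \<longleftrightarrow> \<not> dy_bad \<beta> r \<gamma> I"

definition avg :: "'a measure \<Rightarrow> 'a set \<Rightarrow> ('a \<Rightarrow> 'b::{banach,second_countable_topology}) \<Rightarrow> 'b" where
  "avg \<mu> Q h = inverse (measure \<mu> Q) *\<^sub>R (LINT z:Q|\<mu>. h z)"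

definition stop_cond :: "(real^'n) measure \<Rightarrow> ((real^'n) set \<Rightarrow> real^'n \<Rightarrow> complex) \<Rightarrow> real \<Rightarrow> real
    \<Rightarrow> (real^'n) set \<Rightarrow> (real^'n) set \<Rightarrow> bool" where
  "stop_cond \<mu> b A p F Q \<longleftrightarrow>
     cmod (avg \<mu> Q (b F)) < 1/2 \<or>
     avg \<mu> Q (\<lambda>z. cmod (b F z) powr p) > 2 powr (p/(p-1) + 1) * A powr (p/(p-1))"

definition stop_children :: "(real^'n) measure \<Rightarrow> (int \<Rightarrow> real^'n) \<Rightarrow> ((real^'n) set \<Rightarrow> real^'n \<Rightarrow> complex)
    \<Rightarrow> real \<Rightarrow> real \<Rightarrow> (real^'n) set \<Rightarrow> (real^'n) set set" where
  "stop_children \<mu> \<beta> b A p F =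
     {Q \<in> dy_grid \<beta>. Q \<subset> F \<and> stop_cond \<mu> b A p F Q \<and>
        (\<forall>Q'\<in>dy_grid \<beta>. Q \<subset> Q' \<and> Q' \<subset> F \<longrightarrow> \<not> stop_cond \<mu> b A p F Q')}"

fun stop_gen :: "(real^'n) measure \<Rightarrow> (int \<Rightarrow> real^'n) \<Rightarrow> ((real^'n) set \<Rightarrow> real^'n \<Rightarrow> complex)
    \<Rightarrow> real \<Rightarrow> real \<Rightarrow> (real^'n) set \<Rightarrow> nat \<Rightarrow> (real^'n) set set" where
  "stop_gen \<mu> \<beta> b A p Qs 0 = {Qs}"
| "stop_gen \<mu> \<beta> b A p Qs (Suc j) = (\<Union>F\<in>stop_gen \<mu> \<beta> b A p Qs j. stop_children \<mu> \<beta> b A p F)"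

definition stop_family :: "(real^'n) measure \<Rightarrow> (int \<Rightarrow> real^'n) \<Rightarrow> ((real^'n) set \<Rightarrow> real^'n \<Rightarrow> complex)
    \<Rightarrow> real \<Rightarrow> real \<Rightarrow> (real^'n) set \<Rightarrow> (real^'n) set set" where
  "stop_family \<mu> \<beta> b A p Qs = (\<Union>j. stop_gen \<mu> \<beta> b A p Qs j)"

definition stop_parent :: "(real^'n) measure \<Rightarrow> (int \<Rightarrow> real^'n) \<Rightarrow> ((real^'n) set \<Rightarrow> real^'n \<Rightarrow> complex)
    \<Rightarrow> real \<Rightarrow> real \<Rightarrow> (real^'n) set \<Rightarrow> (real^'n) set \<Rightarrow> (real^'n) set" where
  "stop_parent \<mu> \<beta> b A p Qs Q =
     (THE F. F \<in> stop_family \<mu> \<beta> b A p Qs \<and> Q \<subseteq> F \<and>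
        (\<forall>F'\<in>stop_family \<mu> \<beta> b A p Qs. Q \<subseteq> F' \<longrightarrow> F \<subseteq> F'))"

definition theta :: "(real^'n) measure \<Rightarrow> (real \<Rightarrow> real^'n \<Rightarrow> real^'n \<Rightarrow> complex) \<Rightarrow> real
    \<Rightarrow> (real^'n \<Rightarrow> complex) \<Rightarrow> real^'n \<Rightarrow> complex" where
  "theta \<mu> s t f y = (LINT z|\<mu>. s t y z * f z)"

end

theory Submission
  imports Defs
begin


section \<open>l-infinity distance\<close>

lemma linf_dist_le_iff: "linf_dist x y \<le> c \<longleftrightarrow> (\<forall>i. \<bar>x$i - y$i\<bar> \<le> c)"
  unfolding linf_dist_def by (simp)

lemma linf_dist_less_iff: "linf_dist x y < c \<longleftrightarrow> (\<forall>i. \<bar>x$i - y$i\<bar> < c)"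
  unfolding linf_dist_def by (simp)

lemma linf_dist_ge: "\<bar>x$i - y$i\<bar> \<le> linf_dist x y"
  unfolding linf_dist_def by (rule Max_ge) auto

lemma linf_dist_nonneg: "0 \<le> linf_dist x y"
  using linf_dist_ge[of x undefined y] by (meson abs_ge_zero order_trans)

lemma linf_dist_sym: "linf_dist x y = linf_dist y x"
  unfolding linf_dist_def by (simp add: abs_minus_commute)

lemma linf_dist_triangle: "linf_dist x z \<le> linf_dist x y + linf_dist y z"
  unfolding linf_dist_le_iff
proof
  fix i
  have "\<bar>x$i - z$i\<bar> \<le> \<bar>x$i - y$i\<bar> + \<bar>y$i - z$i\<bar>" by simp
  also have "\<dots> \<le> linf_dist x y + linf_dist y z" using linf_dist_ge add_mono by blast
  finally show "\<bar>x$i - z$i\<bar> \<le> linf_dist x y + linf_dist y z" .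
qed

lemma linf_dist_self [simp]: "linf_dist x x = 0"
  using linf_dist_le_iff[of x x 0] linf_dist_nonneg[of x x] by simp

lemma linf_dist_meas_pair [measurable]:
  "(\<lambda>p::(real^'n)\<times>(real^'n). linf_dist (fst p) (snd p)) \<in> borel_measurable borel"
proof -
  have "(\<lambda>p::(real^'n)\<times>(real^'n). linf_dist (fst p) (snd p)) =
        (\<lambda>p. Max ((\<lambda>i. \<bar>fst p $ i - snd p $ i\<bar>) ` UNIV))"
    unfolding linf_dist_def by auto
  also have "\<dots> \<in> borel_measurable borel"
    by (intro borel_measurable_Max borel_measurable_continuous_onI continuous_intros) auto
  finally show ?thesis .
qed

lemma linf_dist_meas [measurable]:
  "(\<lambda>y::real^'n. linf_dist x y) \<in> borel_measurable borel"
proof -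
  have "(\<lambda>y::real^'n. linf_dist x y) = (\<lambda>y. Max ((\<lambda>i. \<bar>x $ i - y $ i\<bar>) ` UNIV))"
    unfolding linf_dist_def by auto
  also have "\<dots> \<in> borel_measurable borel"
    by (intro borel_measurable_Max borel_measurable_continuous_onI continuous_intros) auto
  finally show ?thesis .
qed




section \<open>Dyadic grid\<close>

definition B01 :: "(int \<Rightarrow> real^'n) \<Rightarrow> bool" where
  "B01 \<beta> \<longleftrightarrow> (\<forall>j i. \<beta> j $ i \<in> {0, 1})"

lemma beta_cases: assumes "B01 \<beta>" shows "\<beta> j $ i = 0 \<or> \<beta> j $ i = 1"
  using assms unfolding B01_def by auto

lemma shift_term_bound:
  assumes b01: "B01 \<beta>"
  shows "norm (2 powr (real_of_int (k - int l)) * (\<beta> (k - int l) $ i)) \<le> 2 powr real_of_int k * (1/2)^l"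
proof -
  have e: "real_of_int (k - int l) = real_of_int k - real l" by simp
  have "2 powr (real_of_int (k - int l)) = 2 powr real_of_int k / 2 powr (real l)"
    unfolding e by (rule powr_diff)
  also have "\<dots> = 2 powr real_of_int k * (1/2)^l"
    by (simp add: powr_realpow power_one_over)
  finally have "2 powr (real_of_int (k - int l)) = 2 powr real_of_int k * (1/2)^l" .
  moreover have "\<bar>\<beta> (k - int l) $ i\<bar> \<le> 1" using beta_cases[OF b01, of "k - int l" i] by auto
  ultimately show ?thesis
    by (simp add: abs_mult)
qed

lemma shift_summable:
  assumes b01: "B01 \<beta>"
  shows "summable (\<lambda>l. 2 powr (real_of_int (k - int l)) * (\<beta> (k - int l) $ i))"
  by (rule summable_comparison_test[OF _ summable_mult[OF summable_geometric[of "1/2::real"]]])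
     (use shift_term_bound[OF b01] in auto)

lemma dy_shift_Suc:
  assumes b01: "B01 \<beta>"
  shows "dy_shift \<beta> (k + 1) i = dy_shift \<beta> k i + 2 powr (real_of_int k) * (\<beta> k $ i)"
proof -
  let ?f = "\<lambda>l. 2 powr (real_of_int (k - int l)) * (\<beta> (k - int l) $ i)"
  have s: "summable ?f" by (rule shift_summable[OF b01])
  have "dy_shift \<beta> (k+1) i = suminf ?f" unfolding dy_shift_def by simp
  moreover have "dy_shift \<beta> k i = (\<Sum>l. ?f (Suc l))" unfolding dy_shift_def
    by (simp add: algebra_simps)
  moreover note suminf_split_head[OF s]
  ultimately show ?thesis by simp
qed

definition dcorner :: "(int \<Rightarrow> real^'n) \<Rightarrow> int \<Rightarrow> int^'n \<Rightarrow> real^'n" where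
  "dcorner \<beta> k v = (\<chi> i. 2 powr (real_of_int k) * real_of_int (v$i) + dy_shift \<beta> k i)"

lemma dy_cube_alt: "dy_cube \<beta> k v =
   {x. \<forall>i. dcorner \<beta> k v $ i \<le> x$i \<and> x$i < dcorner \<beta> k v $ i + 2 powr (real_of_int k)}"
  unfolding dy_cube_def dcorner_def by (auto simp: algebra_simps)

lemma dcorner_in: "dcorner \<beta> k v \<in> dy_cube \<beta> k v"
  unfolding dy_cube_alt by auto

lemma dy_cube_nonempty: "dy_cube \<beta> k v \<noteq> {}"
  using dcorner_in by blast

lemma dy_cube_same_level:
  assumes "x \<in> dy_cube \<beta> k v" "x \<in> dy_cube \<beta> k w"
  shows "v = w"
proof (subst vec_eq_iff, intro allI)
  fix i
  have h: "2 powr (real_of_int k) * real_of_int (v$i) + dy_shift \<beta> k i \<le> x$i"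
          "x$i < 2 powr real_of_int k * real_of_int (v$i) + dy_shift \<beta> k i + 2 powr real_of_int k"
          "2 powr (real_of_int k) * real_of_int (w$i) + dy_shift \<beta> k i \<le> x$i"
          "x$i < 2 powr real_of_int k * real_of_int (w$i) + dy_shift \<beta> k i + 2 powr real_of_int k"
    using assms unfolding dy_cube_alt dcorner_def by auto
  have p: "2 powr real_of_int k > 0" by simp
  from h have "2 powr real_of_int k * real_of_int (v$i) < 2 powr real_of_int k * (real_of_int (w$i) + 1)"
    by (simp add: algebra_simps)
  hence "real_of_int (v$i) < real_of_int (w$i) + 1" using p by (simp add: mult_less_cancel_left_pos)
  hence a: "v$i < w$i + 1" by (metis of_int_1 of_int_add of_int_less_iff)
  from h have "2 powr real_of_int k * real_of_int (w$i) < 2 powr real_of_int k * (real_of_int (v$i) + 1)"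
    by (simp add: algebra_simps)
  hence "real_of_int (w$i) < real_of_int (v$i) + 1" using p by (simp add: mult_less_cancel_left_pos)
  hence b: "w$i < v$i + 1" by (metis of_int_1 of_int_add of_int_less_iff)
  from a b show "v$i = w$i" by simp
qed

definition bint :: "(int \<Rightarrow> real^'n) \<Rightarrow> int \<Rightarrow> 'n \<Rightarrow> int" where
  "bint \<beta> k i = (if \<beta> k $ i = 1 then 1 else 0)"

lemma bint_eq: assumes b01: "B01 \<beta>"
  shows "\<beta> k $ i = real_of_int (bint \<beta> k i)" "0 \<le> bint \<beta> k i" "bint \<beta> k i \<le> 1"
  using beta_cases[OF b01, of k i] unfolding bint_def by auto

lemma dy_cube_parent:
  assumes b01: "B01 \<beta>"
  shows "dy_cube \<beta> k v \<subseteq> dy_cube \<beta> (k+1) (\<chi> i. (v$i - bint \<beta> k i) div 2)"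
proof
  fix x assume x: "x \<in> dy_cube \<beta> k v"
  show "x \<in> dy_cube \<beta> (k+1) (\<chi> i. (v$i - bint \<beta> k i) div 2)"
    unfolding dy_cube_def
  proof (unfold mem_Collect_eq, intro allI)
    fix i
    define w where "w = (v$i - bint \<beta> k i) div 2"
    have w1: "2 * w \<le> v$i - bint \<beta> k i" "v$i - bint \<beta> k i \<le> 2*w + 1" unfolding w_def by auto
    hence w1r: "2 * real_of_int w + real_of_int (bint \<beta> k i) \<le> real_of_int (v$i)"
       "real_of_int (v$i) + 1 \<le> 2*real_of_int w + 2 + real_of_int (bint \<beta> k i)" by linarith+
    let ?P = "2 powr real_of_int k"
    have P: "?P > 0" by simp
    have P2: "2 powr real_of_int (k+1) = 2 * ?P" by (simp add: powr_add)
    have sh: "dy_shift \<beta> (k + 1) i = dy_shift \<beta> k i + ?P * real_of_int (bint \<beta> k i)"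
      using dy_shift_Suc[OF b01] bint_eq[OF b01] by simp
    have xi: "?P * real_of_int (v$i) + dy_shift \<beta> k i \<le> x$i"
             "x$i < ?P * real_of_int (v$i) + dy_shift \<beta> k i + ?P"
      using x unfolding dy_cube_alt dcorner_def by auto
    have l: "?P * (2 * real_of_int w + real_of_int (bint \<beta> k i)) \<le> ?P * real_of_int (v$i)"
      using w1r(1) P by (intro mult_left_mono) auto
    have u: "?P * (real_of_int (v$i) + 1) \<le> ?P * (2*real_of_int w + 2 + real_of_int (bint \<beta> k i))"
      using w1r(2) P by (intro mult_left_mono) auto
    have "2 powr real_of_int (k+1) * real_of_int w + dy_shift \<beta> (k + 1) i \<le> x$i \<and>
          x$i < 2 powr real_of_int (k+1) * (real_of_int w + 1) + dy_shift \<beta> (k + 1) i"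
      unfolding P2 sh using xi l u by (simp add: algebra_simps)
    then show "2 powr real_of_int (k+1) * real_of_int ((\<chi> i. (v$i - bint \<beta> k i) div 2) $ i) + dy_shift \<beta> (k + 1) i \<le> x$i \<and>
          x$i < 2 powr real_of_int (k+1) * (real_of_int ((\<chi> i. (v$i - bint \<beta> k i) div 2) $ i) + 1) + dy_shift \<beta> (k + 1) i"
      unfolding w_def by simp
  qed
qed

lemma dy_cube_anc_ex:
  assumes b01: "B01 \<beta>"
  shows "\<exists>w. dy_cube \<beta> k v \<subseteq> dy_cube \<beta> (k + int j) w"
proof (induction j)
  case 0 then show ?case by auto
next
  case (Suc j)
  then obtain w where w: "dy_cube \<beta> k v \<subseteq> dy_cube \<beta> (k + int j) w" by blast
  have p: "dy_cube \<beta> (k + int j) w \<subseteq> dy_cube \<beta> (k + int j + 1) (\<chi> i. (w$i - bint \<beta> (k + int j) i) div 2)"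
    by (rule dy_cube_parent[OF b01])
  have e: "k + int (Suc j) = k + int j + 1" by simp
  show ?case unfolding e by (rule exI, rule order_trans[OF w p])
qed

lemma dy_cube_nested:
  assumes b01: "B01 \<beta>"
    and "k \<le> k'" "dy_cube \<beta> k v \<inter> dy_cube \<beta> k' w \<noteq> {}"
  shows "dy_cube \<beta> k v \<subseteq> dy_cube \<beta> k' w"
proof -
  obtain u where u: "dy_cube \<beta> k v \<subseteq> dy_cube \<beta> (k + int (nat (k'-k))) u"
    using dy_cube_anc_ex[OF b01] by blast
  have kk: "k + int (nat (k'-k)) = k'" using assms(2) by simp
  from assms(3) obtain x where "x \<in> dy_cube \<beta> k v" "x \<in> dy_cube \<beta> k' w" by blast
  with u kk have "u = w" using dy_cube_same_level[of x \<beta> k' u w] by auto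
  with u kk show ?thesis by simp
qed

lemma dy_cube_eq_level:
  assumes b01: "B01 \<beta>"
    and eq: "dy_cube \<beta> k v = dy_cube \<beta> k' w"
  shows "k = k'"
proof (rule ccontr)
  assume "k \<noteq> k'"
  { fix k k' v w assume lt: "k < k'" and eq: "dy_cube \<beta> k v = dy_cube \<beta> k' w"
    let ?a = "dcorner \<beta> k v" and ?b = "dcorner \<beta> k' w"
    have "?a \<in> dy_cube \<beta> k' w" using eq dcorner_in by metis
    hence ab: "\<And>i. ?b$i \<le> ?a$i" unfolding dy_cube_alt by auto
    have "?b \<in> dy_cube \<beta> k v" using eq dcorner_in by metis
    hence ba: "\<And>i. ?a$i \<le> ?b$i" unfolding dy_cube_alt by auto
    have pp: "2 powr real_of_int k < 2 powr real_of_int k'" using lt by simp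
    let ?c = "(\<chi> i. ?a$i + 2 powr real_of_int k) :: real^'a"
    have eqab: "\<And>i. ?a$i = ?b$i" using ab ba by (meson order_antisym)
    have "\<forall>i. ?b$i \<le> ?c$i \<and> ?c$i < ?b$i + 2 powr real_of_int k'"
    proof
      fix i
      have "(0::real) < 2 powr real_of_int k" by simp
      then show "?b$i \<le> ?c$i \<and> ?c$i < ?b$i + 2 powr real_of_int k'"
        using eqab[of i] pp by simp
    qed
    hence "?c \<in> dy_cube \<beta> k' w" unfolding dy_cube_alt by blast
    moreover have "?c \<notin> dy_cube \<beta> k v" unfolding dy_cube_alt by auto
    ultimately have False using eq by blast }
  note * = this
  show False
    using \<open>k \<noteq> k'\<close> *[of k k' v w] *[of k' k w v] eq by (metis linorder_neqE)
qed

lemma dy_grid_cube: "Q \<in> dy_grid \<beta> \<longleftrightarrow> (\<exists>k v. Q = dy_cube \<beta> k v)"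
  unfolding dy_grid_def dy_level_grid_def by auto

lemma dy_level_cube:
  assumes b01: "B01 \<beta>"
  shows "dy_level \<beta> (dy_cube \<beta> k v) = k"
  unfolding dy_level_def
  by (rule the_equality) (auto simp: dy_level_grid_def dest: dy_cube_eq_level[OF b01])

lemma side_cube:
  assumes b01: "B01 \<beta>"
  shows "side \<beta> (dy_cube \<beta> k v) = 2 powr real_of_int k"
  unfolding side_def dy_level_cube[OF b01] ..

lemma dy_anc_cube:
  assumes b01: "B01 \<beta>"
  shows "\<exists>w. dy_anc \<beta> (dy_cube \<beta> k v) j = dy_cube \<beta> (k + int j) w \<and>
            dy_cube \<beta> k v \<subseteq> dy_cube \<beta> (k + int j) w"
proof -
  obtain w where w: "dy_cube \<beta> k v \<subseteq> dy_cube \<beta> (k + int j) w"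
    using dy_cube_anc_ex[OF b01] by blast
  have "dy_anc \<beta> (dy_cube \<beta> k v) j = dy_cube \<beta> (k + int j) w"
    unfolding dy_anc_def dy_level_cube[OF b01]
  proof (rule the_equality)
    show "dy_cube \<beta> (k + int j) w \<in> dy_level_grid \<beta> (k + int j) \<and> dy_cube \<beta> k v \<subseteq> dy_cube \<beta> (k + int j) w"
      using w by (auto simp: dy_level_grid_def)
  next
    fix P assume "P \<in> dy_level_grid \<beta> (k + int j) \<and> dy_cube \<beta> k v \<subseteq> P"
    then obtain u where u: "P = dy_cube \<beta> (k + int j) u" "dy_cube \<beta> k v \<subseteq> P"
      by (auto simp: dy_level_grid_def)
    have "dcorner \<beta> k v \<in> P" "dcorner \<beta> k v \<in> dy_cube \<beta> (k + int j) w"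
      using u w dcorner_in by blast+
    then show "P = dy_cube \<beta> (k + int j) w" using u dy_cube_same_level by metis
  qed
  with w show ?thesis by blast
qed

lemma dy_cube_measurable [measurable]: "dy_cube \<beta> k v \<in> sets borel"
proof -
  have "dy_cube \<beta> k v = (\<Inter>i. {x. dcorner \<beta> k v $ i \<le> x$i} \<inter> {x. x$i < dcorner \<beta> k v $ i + 2 powr real_of_int k})"
    unfolding dy_cube_alt by auto
  also have "\<dots> \<in> sets borel" by measurable
  finally show ?thesis .
qed

lemma dy_cube_ball: "dy_cube \<beta> k v \<subseteq> linf_ball (dcorner \<beta> k v) (2 powr real_of_int k)"
proof
  fix y assume "y \<in> dy_cube \<beta> k v"
  hence h: "\<And>i. dcorner \<beta> k v $ i \<le> y$i \<and> y$i < dcorner \<beta> k v $ i + 2 powr real_of_int k"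
    unfolding dy_cube_alt by auto
  have "\<And>i. \<bar>dcorner \<beta> k v $ i - y$i\<bar> < 2 powr real_of_int k"
  proof -
    fix i show "\<bar>dcorner \<beta> k v $ i - y$i\<bar> < 2 powr real_of_int k" using h[of i] by linarith
  qed
  then show "y \<in> linf_ball (dcorner \<beta> k v) (2 powr real_of_int k)"
    unfolding linf_ball_def linf_dist_less_iff by auto
qed




lemma grid_cube: "Q \<in> dy_grid \<beta> \<Longrightarrow> \<exists>k v. Q = dy_cube \<beta> k v"
  using dy_grid_cube by blast

lemma grid_nonempty: "Q \<in> dy_grid \<beta> \<Longrightarrow> Q \<noteq> {}"
  using grid_cube dy_cube_nonempty by metis

lemma grid_measurable: "Q \<in> dy_grid \<beta> \<Longrightarrow> Q \<in> sets borel"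
  using grid_cube dy_cube_measurable by metis

lemma grid_nested:
  assumes b01: "B01 \<beta>" and "Q \<in> dy_grid \<beta>" "P \<in> dy_grid \<beta>"
    and "dy_level \<beta> Q \<le> dy_level \<beta> P" "Q \<inter> P \<noteq> {}"
  shows "Q \<subseteq> P"
proof -
  obtain k v where Q: "Q = dy_cube \<beta> k v" using assms(2) grid_cube by blast
  obtain k' w where P: "P = dy_cube \<beta> k' w" using assms(3) grid_cube by blast
  show ?thesis using assms(4,5) unfolding Q P dy_level_cube[OF b01]
    by (rule dy_cube_nested[OF b01])
qed

lemma grid_comparable:
  assumes b01: "B01 \<beta>" and "Q \<in> dy_grid \<beta>" "P \<in> dy_grid \<beta>" "Q \<inter> P \<noteq> {}"
  shows "Q \<subseteq> P \<or> P \<subseteq> Q"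
proof (cases "dy_level \<beta> Q \<le> dy_level \<beta> P")
  case True then show ?thesis using grid_nested[OF b01 assms(2,3)] assms(4) by blast
next
  case False then show ?thesis using grid_nested[OF b01 assms(3,2)] assms(4) by (simp add: inf_commute)
qed

lemma grid_psubset_level:
  assumes b01: "B01 \<beta>" and "Q \<in> dy_grid \<beta>" "P \<in> dy_grid \<beta>" "Q \<subset> P"
  shows "dy_level \<beta> Q < dy_level \<beta> P"
proof (rule ccontr)
  assume "\<not> dy_level \<beta> Q < dy_level \<beta> P"
  hence "dy_level \<beta> P \<le> dy_level \<beta> Q" by simp
  moreover have "P \<inter> Q \<noteq> {}" using assms(4) grid_nonempty[OF assms(2)] by blast
  ultimately have "P \<subseteq> Q" using grid_nested[OF b01 assms(3,2)] by blast
  with assms(4) show False by blast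
qed

lemma grid_anc:
  assumes b01: "B01 \<beta>" and Q: "Q \<in> dy_grid \<beta>"
  shows "dy_anc \<beta> Q j \<in> dy_grid \<beta>" "Q \<subseteq> dy_anc \<beta> Q j"
    "dy_level \<beta> (dy_anc \<beta> Q j) = dy_level \<beta> Q + int j"
    "side \<beta> (dy_anc \<beta> Q j) = 2 powr real j * side \<beta> Q"
proof -
  obtain k v where Qe: "Q = dy_cube \<beta> k v" using Q grid_cube by blast
  obtain w where w: "dy_anc \<beta> Q j = dy_cube \<beta> (k + int j) w" "Q \<subseteq> dy_cube \<beta> (k + int j) w"
    using dy_anc_cube[OF b01, of k v j] Qe by blast
  show "dy_anc \<beta> Q j \<in> dy_grid \<beta>" using w dy_grid_cube by blast
  show "Q \<subseteq> dy_anc \<beta> Q j" using w by simp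
  show "dy_level \<beta> (dy_anc \<beta> Q j) = dy_level \<beta> Q + int j"
    using w Qe dy_level_cube[OF b01] by simp
  show "side \<beta> (dy_anc \<beta> Q j) = 2 powr real j * side \<beta> Q"
    using w Qe side_cube[OF b01] by (simp add: powr_add)
qed

lemma grid_anc_mono:
  assumes b01: "B01 \<beta>" and Q: "Q \<in> dy_grid \<beta>" and "j \<le> j'"
  shows "dy_anc \<beta> Q j \<subseteq> dy_anc \<beta> Q j'"
proof (rule grid_nested[OF b01 grid_anc(1)[OF b01 Q] grid_anc(1)[OF b01 Q]])
  show "dy_level \<beta> (dy_anc \<beta> Q j) \<le> dy_level \<beta> (dy_anc \<beta> Q j')"
    using grid_anc(3)[OF b01 Q] assms(3) by simp
  show "dy_anc \<beta> Q j \<inter> dy_anc \<beta> Q j' \<noteq> {}"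
    using grid_anc(2)[OF b01 Q, of j] grid_anc(2)[OF b01 Q, of j'] grid_nonempty[OF Q] by blast
qed

lemma grid_side_pos: "B01 \<beta> \<Longrightarrow> Q \<in> dy_grid \<beta> \<Longrightarrow> side \<beta> Q > 0"
  unfolding side_def by simp

lemma grid_ball:
  assumes b01: "B01 \<beta>" and Q: "Q \<in> dy_grid \<beta>"
  shows "\<exists>c. Q \<subseteq> linf_ball c (side \<beta> Q)"
proof -
  obtain k v where Qe: "Q = dy_cube \<beta> k v" using Q grid_cube by blast
  show ?thesis using dy_cube_ball[of \<beta> k v] unfolding Qe side_cube[OF b01] by blast
qed

lemma grid_level_grid: "B01 \<beta> \<Longrightarrow> Q \<in> dy_level_grid \<beta> k \<Longrightarrow> Q \<in> dy_grid \<beta> \<and> dy_level \<beta> Q = k"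
  unfolding dy_level_grid_def dy_grid_def using dy_level_cube by fastforce

section \<open>Stopping cubes\<close>

lemma stop_gen_grid:
  assumes "Qs \<in> dy_grid \<beta>"
  shows "stop_gen \<mu> \<beta> b A p Qs j \<subseteq> dy_grid \<beta>"
  by (induction j) (use assms in \<open>auto simp: stop_children_def\<close>)

lemma stop_family_grid:
  assumes "Qs \<in> dy_grid \<beta>" "F \<in> stop_family \<mu> \<beta> b A p Qs"
  shows "F \<in> dy_grid \<beta>"
  using assms stop_gen_grid unfolding stop_family_def by blast

lemma Qs_in_family: "Qs \<in> stop_family \<mu> \<beta> b A p Qs"
  unfolding stop_family_def by (auto intro!: exI[of _ 0])

lemma stop_parent_props:
  fixes \<mu> :: "(real^'n) measure" and b :: "(real^'n) set \<Rightarrow> real^'n \<Rightarrow> complex" and A p :: real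
  assumes b01: "B01 \<beta>" and Qs: "Qs \<in> dy_grid \<beta>" and Q: "Q \<in> dy_grid \<beta>" and QQs: "Q \<subseteq> Qs"
  defines "F \<equiv> stop_parent \<mu> \<beta> b A p Qs Q"
  shows "F \<in> stop_family \<mu> \<beta> b A p Qs \<and> Q \<subseteq> F \<and>
         (\<forall>F'\<in>stop_family \<mu> \<beta> b A p Qs. Q \<subseteq> F' \<longrightarrow> F \<subseteq> F')"
proof -
  let ?fam = "stop_family \<mu> \<beta> b A p Qs"
  let ?P = "\<lambda>F. F \<in> ?fam \<and> Q \<subseteq> F"
  obtain F0 where F0: "?P F0" "\<And>F'. ?P F' \<Longrightarrow> nat (dy_level \<beta> F0 - dy_level \<beta> Q) \<le> nat (dy_level \<beta> F' - dy_level \<beta> Q)"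
    using ex_has_least_nat[of ?P Qs "\<lambda>F. nat (dy_level \<beta> F - dy_level \<beta> Q)"] Qs_in_family QQs by blast
  have lev: "\<And>F'. ?P F' \<Longrightarrow> dy_level \<beta> Q \<le> dy_level \<beta> F'"
  proof -
    fix F' assume P: "?P F'"
    hence F'g: "F' \<in> dy_grid \<beta>" using stop_family_grid[OF Qs] by blast
    show "dy_level \<beta> Q \<le> dy_level \<beta> F'"
    proof (rule ccontr)
      assume "\<not> dy_level \<beta> Q \<le> dy_level \<beta> F'"
      hence "F' \<subseteq> Q" using grid_nested[OF b01 F'g Q] P grid_nonempty[OF Q] by force
      hence "F' = Q" using P by blast
      thus False using \<open>\<not> dy_level \<beta> Q \<le> dy_level \<beta> F'\<close> by simp
    qed
  qed
  have min: "\<And>F'. ?P F' \<Longrightarrow> F0 \<subseteq> F'"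
  proof -
    fix F' assume P: "?P F'"
    have g: "F0 \<in> dy_grid \<beta>" "F' \<in> dy_grid \<beta>" using P F0(1) stop_family_grid[OF Qs] by blast+
    have "dy_level \<beta> F0 \<le> dy_level \<beta> F'" using F0(2)[OF P] lev[OF P] lev[OF F0(1)] by linarith
    moreover have "F0 \<inter> F' \<noteq> {}" using P F0(1) grid_nonempty[OF Q] by blast
    ultimately show "F0 \<subseteq> F'" using grid_nested[OF b01 g] by blast
  qed
  have "stop_parent \<mu> \<beta> b A p Qs Q = F0"
    unfolding stop_parent_def
  proof (rule the_equality)
    show "F0 \<in> ?fam \<and> Q \<subseteq> F0 \<and> (\<forall>F'\<in>?fam. Q \<subseteq> F' \<longrightarrow> F0 \<subseteq> F')" using F0(1) min by blast
  next
    fix F assume "F \<in> ?fam \<and> Q \<subseteq> F \<and> (\<forall>F'\<in>?fam. Q \<subseteq> F' \<longrightarrow> F \<subseteq> F')"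
    then show "F = F0" using F0(1) min by blast
  qed
  then show ?thesis unfolding F_def using F0(1) min by blast
qed

lemma stop_parent_nonstop:
  fixes \<mu> :: "(real^'n) measure" and b :: "(real^'n) set \<Rightarrow> real^'n \<Rightarrow> complex" and A p :: real
  assumes b01: "B01 \<beta>" and Qs: "Qs \<in> dy_grid \<beta>" and Q: "Q \<in> dy_grid \<beta>" and QQs: "Q \<subseteq> Qs"
  defines "F \<equiv> stop_parent \<mu> \<beta> b A p Qs Q"
  assumes P: "P \<in> dy_grid \<beta>" "Q \<subseteq> P" "P \<subset> F"
  shows "\<not> stop_cond \<mu> b A p F P"
proof
  assume stop: "stop_cond \<mu> b A p F P"
  let ?fam = "stop_family \<mu> \<beta> b A p Qs"
  have Fp: "F \<in> ?fam" "Q \<subseteq> F" "\<And>F'. F' \<in> ?fam \<Longrightarrow> Q \<subseteq> F' \<Longrightarrow> F \<subseteq> F'"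
    using stop_parent_props[OF b01 Qs Q QQs] unfolding F_def by blast+
  have Fg: "F \<in> dy_grid \<beta>" using stop_family_grid[OF Qs Fp(1)] .
  let ?S = "\<lambda>P'. P' \<in> dy_grid \<beta> \<and> P \<subseteq> P' \<and> P' \<subset> F \<and> stop_cond \<mu> b A p F P'"
  obtain P0 where P0: "?S P0" "\<And>P'. ?S P' \<Longrightarrow> nat (dy_level \<beta> F - dy_level \<beta> P0) \<le> nat (dy_level \<beta> F - dy_level \<beta> P')"
    using ex_has_least_nat[of ?S P "\<lambda>P'. nat (dy_level \<beta> F - dy_level \<beta> P')"] P stop by blast
  have child: "P0 \<in> stop_children \<mu> \<beta> b A p F"
    unfolding stop_children_def
  proof (intro CollectI conjI ballI impI)
    show "P0 \<in> dy_grid \<beta>" "P0 \<subset> F" "stop_cond \<mu> b A p F P0" using P0(1) by auto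
  next
    fix Q' assume Q'g: "Q' \<in> dy_grid \<beta>" and Q': "P0 \<subset> Q' \<and> Q' \<subset> F"
    show "\<not> stop_cond \<mu> b A p F Q'"
    proof
      assume "stop_cond \<mu> b A p F Q'"
      hence S: "?S Q'" using Q'g Q' P0(1) by blast
      have "dy_level \<beta> P0 < dy_level \<beta> Q'" using grid_psubset_level[OF b01 _ Q'g] P0(1) Q' by blast
      moreover have "dy_level \<beta> Q' < dy_level \<beta> F" using grid_psubset_level[OF b01 Q'g Fg] Q' by blast
      ultimately show False using P0(2)[OF S] by linarith
    qed
  qed
  obtain j where "F \<in> stop_gen \<mu> \<beta> b A p Qs j" using Fp(1) unfolding stop_family_def by blast
  hence "P0 \<in> stop_gen \<mu> \<beta> b A p Qs (Suc j)" using child by auto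
  hence "P0 \<in> ?fam" unfolding stop_family_def by blast
  moreover have "Q \<subseteq> P0" using P0(1) P(2) by blast
  ultimately have "F \<subseteq> P0" using Fp(3) by blast
  with P0(1) show False by blast
qed




lemma segment_linf_dist:
  assumes "w \<in> closed_segment x z"
  shows "linf_dist x w \<le> linf_dist x (z::real^'n)"
proof -
  obtain u where u: "0 \<le> u" "u \<le> 1" "w = (1 - u) *\<^sub>R x + u *\<^sub>R z"
    using assms in_segment(1) by blast
  show ?thesis unfolding linf_dist_le_iff
  proof
    fix i
    have "w$i = (1-u)*x$i + u*z$i" using u(3) by simp
    hence "x$i - w$i = u * (x$i - z$i)" by (simp add: algebra_simps)
    hence "\<bar>x$i - w$i\<bar> = u * \<bar>x$i - z$i\<bar>" using u by (simp add: abs_mult)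
    also have "\<dots> \<le> \<bar>x$i - z$i\<bar>" using u by (simp add: mult_left_le_one_le)
    also have "\<dots> \<le> linf_dist x z" by (rule linf_dist_ge)
    finally show "\<bar>x$i - w$i\<bar> \<le> linf_dist x z" .
  qed
qed

lemma setdist_le:
  assumes "a \<in> S" "c \<in> T"
  shows "linf_setdist S T \<le> linf_dist a c"
  unfolding linf_setdist_def
  by (rule cInf_lower) (use assms linf_dist_nonneg in \<open>auto intro!: bdd_belowI[of _ 0]\<close>)

lemma good_far:
  assumes b01: "B01 \<beta>" and R: "R \<in> dy_grid \<beta>" and good: "dy_good \<beta> r \<gamma> R"
    and j: "r \<le> j" and x: "x \<in> R" and z: "z \<notin> dy_anc \<beta> R j" and g: "0 < \<gamma>" "\<gamma> < 1"
  shows "side \<beta> R * 2 powr (real j * (1 - \<gamma>)) < linf_dist x z"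
proof -
  let ?J = "dy_anc \<beta> R j" and ?L = "side \<beta> R"
  have Jg: "?J \<in> dy_grid \<beta>" and RJ: "R \<subseteq> ?J" and sJ: "side \<beta> ?J = 2 powr real j * ?L"
    using grid_anc[OF b01 R] by auto
  have L: "?L > 0" using grid_side_pos[OF b01 R] .
  have "(2::real) ^ r \<le> 2 ^ j" using j by (rule power_increasing) simp
  hence "2 ^ r * ?L \<le> side \<beta> ?J" unfolding sJ using L by (simp add: powr_realpow)
  hence notle: "\<not> linf_setdist R (frontier ?J) \<le> ?L powr \<gamma> * side \<beta> ?J powr (1 - \<gamma>)"
    using good Jg unfolding dy_good_def dy_bad_def by blast
  have eq: "?L powr \<gamma> * side \<beta> ?J powr (1 - \<gamma>) = ?L * 2 powr (real j * (1 - \<gamma>))"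
  proof -
    have "side \<beta> ?J powr (1 - \<gamma>) = (2 powr real j) powr (1-\<gamma>) * ?L powr (1 - \<gamma>)"
      unfolding sJ using L by (simp add: powr_mult)
    also have "(2 powr real j) powr (1-\<gamma>) = 2 powr (real j * (1 - \<gamma>))" by (simp add: powr_powr)
    finally have "?L powr \<gamma> * side \<beta> ?J powr (1 - \<gamma>) = 2 powr (real j * (1 - \<gamma>)) * (?L powr \<gamma> * ?L powr (1 - \<gamma>))"
      by (simp add: algebra_simps)
    also have "?L powr \<gamma> * ?L powr (1 - \<gamma>) = ?L" using L by (simp add: powr_add[symmetric])
    finally show ?thesis by simp
  qed
  have "closed_segment x z \<inter> frontier ?J \<noteq> {}"
    by (rule connected_Int_frontier) (use x z RJ in auto)
  then obtain w where w: "w \<in> closed_segment x z" "w \<in> frontier ?J" by blast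
  have "linf_setdist R (frontier ?J) \<le> linf_dist x w" using setdist_le[OF x w(2)] .
  also have "\<dots> \<le> linf_dist x z" using segment_linf_dist[OF w(1)] .
  finally show ?thesis using notle eq by linarith
qed

lemma good_cover:
  assumes b01: "B01 \<beta>" and R: "R \<in> dy_grid \<beta>" and good: "dy_good \<beta> r \<gamma> R"
    and x: "x \<in> R" and g: "0 < \<gamma>" "\<gamma> < 1"
  shows "\<exists>j. z \<in> dy_anc \<beta> R j"
proof (rule ccontr)
  assume "\<not> ?thesis"
  hence far: "\<And>j. r \<le> j \<Longrightarrow> side \<beta> R * 2 powr (real j * (1 - \<gamma>)) < linf_dist x z"
    using good_far[OF b01 R good _ x _ g] by blast
  have L: "side \<beta> R > 0" using grid_side_pos[OF b01 R] .
  obtain n :: nat where n: "linf_dist x z / side \<beta> R < real n" using reals_Archimedean2 by blast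
  define j where "j = max r (nat \<lceil>real n / (1 - \<gamma>)\<rceil>)"
  have "real n / (1 - \<gamma>) \<le> real j" unfolding j_def by linarith
  hence "real n \<le> real j * (1 - \<gamma>)" using g by (simp add: field_simps)
  hence m: "2 powr real n \<le> 2 powr (real j * (1 - \<gamma>))" by (intro powr_mono) auto
  have "n < 2^n" by (rule less_exp)
  hence "real n < real (2^n)" by (simp only: of_nat_less_iff)
  also have "real (2^n) = 2 powr real n" by (simp add: powr_realpow)
  finally have "real n \<le> 2 powr (real j * (1 - \<gamma>))" using m by linarith
  hence nj: "real n * side \<beta> R \<le> 2 powr (real j * (1 - \<gamma>)) * side \<beta> R" using L by (intro mult_right_mono) auto
  have "linf_dist x z < real n * side \<beta> R" using n L by (simp add: field_simps)
  hence "linf_dist x z < side \<beta> R * 2 powr (real j * (1 - \<gamma>))" using nj by (simp add: mult.commute)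
  with far[of j] show False unfolding j_def by linarith
qed




lemma ennreal_le_suminf: "f k \<le> (\<Sum>n. f n :: ennreal)"
  using sum_le_suminf[of f "{k}"] by auto

lemma linf_ball_sets [measurable]: "linf_ball x r \<in> sets borel"
  unfolding linf_ball_def by measurable

lemma two_powr_neg: "x < 0 \<Longrightarrow> 2 powr x < (1::real)"
  by (rule powr_less_one) auto

lemma geom_ennreal:
  assumes "0 \<le> a" "0 \<le> q" "q < 1"
  shows "(\<Sum>k. ennreal (a * q ^ k)) = ennreal (a / (1 - q))"
proof -
  have "summable (\<lambda>k. a * q ^ k)" using assms by (intro summable_mult summable_geometric) auto
  hence "(\<Sum>k. ennreal (a * q ^ k)) = ennreal (\<Sum>k. a * q ^ k)"
    using assms by (intro suminf_ennreal2) auto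
  also have "(\<Sum>k. a * q ^ k) = a / (1 - q)"
    using assms suminf_geometric[of q] by (simp add: suminf_mult)
  finally show ?thesis .
qed

lemma powr_nat_power: "0 < (c::real) \<Longrightarrow> (c powr x) ^ k = c powr (real k * x)"
  by (simp add: powr_realpow[symmetric] powr_powr mult.commute)

locale gm =
  fixes \<mu> :: "(real^'n) measure" and Cm m :: real
  assumes sets_eq: "sets \<mu> = sets borel" and m_pos: "m > 0"
    and growth: "\<And>x \<rho>. \<rho> > 0 \<Longrightarrow> emeasure \<mu> (linf_ball x \<rho>) \<le> ennreal (Cm * \<rho> powr m)"
begin

definition "C0 = max Cm 0"

lemma C0_nonneg: "0 \<le> C0" unfolding C0_def by simp

lemma growth0: "\<rho> > 0 \<Longrightarrow> emeasure \<mu> (linf_ball x \<rho>) \<le> ennreal (C0 * \<rho> powr m)"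
proof -
  assume r: "\<rho> > 0"
  have "ennreal (Cm * \<rho> powr m) \<le> ennreal (max Cm 0 * \<rho> powr m)" by (rule ennreal_leI, rule mult_right_mono) simp_all
  then show ?thesis unfolding C0_def by (rule order_trans[OF growth[OF r]])
qed

lemma space_eq [simp]: "space \<mu> = UNIV"
  using sets_eq_imp_space_eq[OF sets_eq] by simp

lemma meas_eq: "measurable \<mu> N = measurable borel N"
  by (rule measurable_cong_sets[OF sets_eq refl])

lemma sets_mu [measurable_cong]: "sets \<mu> = sets borel" by (rule sets_eq)

lemma ball_finite: "\<rho> > 0 \<Longrightarrow> emeasure \<mu> (linf_ball x \<rho>) < \<infinity>"
  using growth0[of \<rho> x] by (simp add: le_less_trans)

lemma sigma_fin: "sigma_finite_measure \<mu>"
proof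
  show "\<exists>A. countable A \<and> A \<subseteq> sets \<mu> \<and> \<Union> A = space \<mu> \<and> (\<forall>a\<in>A. emeasure \<mu> a \<noteq> \<infinity>)"
  proof (intro exI conjI)
    let ?A = "range (\<lambda>n::nat. linf_ball 0 (real n + 1))"
    show "countable ?A" by simp
    show "?A \<subseteq> sets \<mu>" unfolding sets_eq by (rule image_subsetI, rule linf_ball_sets)
    show "\<Union> ?A = space \<mu>"
    proof (auto simp: linf_ball_def)
      fix y :: "real^'n"
      obtain n :: nat where "linf_dist 0 y < real n" using reals_Archimedean2 by blast
      then show "\<exists>n. linf_dist 0 y < real n + 1" by (intro exI[of _ n]) simp
    qed
    show "\<forall>a\<in>?A. emeasure \<mu> a \<noteq> \<infinity>" using ball_finite by (auto simp: less_top)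
  qed
qed

lemma pair_sf: "pair_sigma_finite \<mu> \<mu>"
  using sigma_fin by (simp add: pair_sigma_finite_def)

lemma ratio_bound:
  assumes t: "0 < t" and q: "0 < q"
  shows "ennreal ((t / (t + linf_dist c y)) powr q)
     \<le> (\<Sum>k. ennreal (2 powr (- real k * q)) * indicator (linf_ball c (2 powr (real k + 1) * t)) y)"
proof -
  let ?d = "linf_dist c y"
  have d: "0 \<le> ?d" by (rule linf_dist_nonneg)
  have ex: "\<exists>n::nat. ?d < 2 powr (real n + 1) * t"
  proof -
    obtain n :: nat where n: "?d / t < real n" using reals_Archimedean2 by blast
    have "real n < real (2 ^ n)" by (simp only: of_nat_less_iff less_exp)
    also have "real (2 ^ n) = 2 ^ n" by simp
    also have "\<dots> \<le> 2 powr (real n + 1)" by (simp add: powr_realpow[symmetric] del: powr_realpow)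
    finally have "?d / t < 2 powr (real n + 1)" using n by linarith
    then show ?thesis using t by (intro exI[of _ n]) (simp add: field_simps)
  qed
  define k where "k = (LEAST n::nat. ?d < 2 powr (real n + 1) * t)"
  have k1: "?d < 2 powr (real k + 1) * t" unfolding k_def by (rule LeastI_ex[OF ex])
  have k2: "(t / (t + ?d)) powr q \<le> 2 powr (- real k * q)"
  proof (cases k)
    case 0
    have "t / (t + ?d) \<le> 1" using t d by simp
    hence "(t / (t + ?d)) powr q \<le> 1 powr q" using t d q by (intro powr_mono2) auto
    then show ?thesis using 0 by simp
  next
    case (Suc k')
    have "\<not> ?d < 2 powr (real k' + 1) * t" using not_less_Least[of k' "\<lambda>n. ?d < 2 powr (real n + 1) * t"] Suc
      unfolding k_def by simp
    moreover have "real k = real k' + 1" using Suc by simp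
    ultimately have dk: "2 powr real k * t \<le> ?d" by simp
    have "t / (t + ?d) \<le> t / (2 powr real k * t)"
    proof (rule divide_left_mono)
      have a: "0 < 2 powr real k * t" using t by simp
      have b: "0 < t + ?d" using t d by simp
      show "0 < (t + ?d) * (2 powr real k * t)" using b a by (rule mult_pos_pos)
    qed (use t dk d in auto)
    also have "\<dots> = 2 powr (- real k)" using t by (simp add: powr_minus field_simps)
    finally have "(t / (t + ?d)) powr q \<le> (2 powr (- real k)) powr q" using t d q by (intro powr_mono2) auto
    then show ?thesis by (simp add: powr_powr)
  qed
  have "ennreal ((t / (t + ?d)) powr q) \<le> ennreal (2 powr (- real k * q)) * indicator (linf_ball c (2 powr (real k + 1) * t)) y"
    using k1 k2 by (simp add: linf_ball_def ennreal_leI)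
  also have "\<dots> \<le> (\<Sum>k. ennreal (2 powr (- real k * q)) * indicator (linf_ball c (2 powr (real k + 1) * t)) y)"
    by (rule ennreal_le_suminf)
  finally show ?thesis .
qed

definition "KI q = C0 * 2 powr m / (1 - 2 powr (m - q))"

lemma KI_nonneg: "m < q \<Longrightarrow> 0 \<le> KI q"
proof -
  assume "m < q"
  hence "2 powr (m - q) < 1" by (intro two_powr_neg) simp
  then show ?thesis unfolding KI_def using C0_nonneg by (intro divide_nonneg_nonneg mult_nonneg_nonneg) auto
qed

lemma kernel_integral:
  assumes t: "0 < t" and q: "m < q"
  shows "(\<integral>\<^sup>+ y. ennreal ((t / (t + linf_dist c y)) powr q) \<partial>\<mu>) \<le> ennreal (KI q * t powr m)"
proof -
  have q0: "0 < q" using q m_pos by simp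
  let ?r = "2 powr (m - q)"
  have r: "0 < ?r" "?r < 1" using q by (auto intro: two_powr_neg)
  have "(\<integral>\<^sup>+ y. ennreal ((t / (t + linf_dist c y)) powr q) \<partial>\<mu>)
      \<le> (\<integral>\<^sup>+ y. (\<Sum>k. ennreal (2 powr (- real k * q)) * indicator (linf_ball c (2 powr (real k + 1) * t)) y) \<partial>\<mu>)"
    by (intro nn_integral_mono ratio_bound t q0)
  also have "\<dots> = (\<Sum>k. \<integral>\<^sup>+ y. ennreal (2 powr (- real k * q)) * indicator (linf_ball c (2 powr (real k + 1) * t)) y \<partial>\<mu>)"
    by (rule nn_integral_suminf) (simp add: meas_eq)
  also have "\<dots> = (\<Sum>k. ennreal (2 powr (- real k * q)) * emeasure \<mu> (linf_ball c (2 powr (real k + 1) * t)))"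
    by (intro suminf_cong nn_integral_cmult_indicator) (simp add: sets_eq)
  also have "\<dots> \<le> (\<Sum>k. ennreal (C0 * 2 powr m * t powr m * ?r ^ k))"
  proof (intro suminf_le summableI)
    fix k :: nat
    have pos: "0 < 2 powr (real k + 1) * t" using t by simp
    have "ennreal (2 powr (- real k * q)) * emeasure \<mu> (linf_ball c (2 powr (real k + 1) * t))
        \<le> ennreal (2 powr (- real k * q)) * ennreal (C0 * (2 powr (real k + 1) * t) powr m)"
      by (rule mult_left_mono[OF growth0[OF pos]]) simp
    also have "\<dots> = ennreal (2 powr (- real k * q) * (C0 * (2 powr (real k + 1) * t) powr m))"
      by (simp add: ennreal_mult'[symmetric])
    also have "2 powr (- real k * q) * (C0 * (2 powr (real k + 1) * t) powr m) = C0 * 2 powr m * t powr m * ?r ^ k"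
    proof -
      have "(2 powr (real k + 1) * t) powr m = 2 powr ((real k + 1) * m) * t powr m"
        using t by (simp add: powr_mult powr_powr)
      moreover have "?r ^ k = 2 powr (real k * (m - q))" by (simp add: powr_nat_power)
      ultimately show ?thesis
        by (simp add: algebra_simps powr_add[symmetric])
    qed
    finally show "ennreal (2 powr (- real k * q)) * emeasure \<mu> (linf_ball c (2 powr (real k + 1) * t))
        \<le> ennreal (C0 * 2 powr m * t powr m * ?r ^ k)" .
  qed
  also have "\<dots> = ennreal (C0 * 2 powr m * t powr m / (1 - ?r))"
    using r C0_nonneg by (intro geom_ennreal) auto
  also have "C0 * 2 powr m * t powr m / (1 - ?r) = KI q * t powr m" unfolding KI_def by simp
  finally show ?thesis .
qed

end



lemma ennreal_sq_sum: "((a::ennreal) + b)^2 \<le> 2 * a^2 + 2 * b^2"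
proof (cases a; cases b)
  fix x y :: real assume h: "a = ennreal x" "0 \<le> x" "b = ennreal y" "0 \<le> y"
  have r: "(x + y)^2 \<le> 2 * x^2 + 2 * y^2"
  proof -
    have "(x + y)^2 = 2 * x^2 + 2 * y^2 - (x - y)^2" by (simp add: power2_eq_square algebra_simps)
    moreover have "0 \<le> (x - y)^2" by simp
    ultimately show ?thesis by linarith
  qed
  have e1: "a + b = ennreal (x + y)" using h by simp
  have e2: "(a + b)^2 = ennreal ((x + y)^2)"
  proof -
    have "(a + b)^2 = ennreal (x + y) ^ 2" by (simp only: e1)
    also have "\<dots> = ennreal ((x + y)^2)" using h by (intro ennreal_power) simp
    finally show ?thesis .
  qed
  have e3: "2 * a^2 + 2 * b^2 = ennreal (2*x^2 + 2*y^2)"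
    using h by (simp add: ennreal_mult ennreal_power)
  show ?thesis unfolding e2 e3 using r by (rule ennreal_leI)
qed (auto simp: top_add add_top power2_eq_square)

lemma linf_dist_meas1 [measurable]: "(\<lambda>y::real^'n. linf_dist y z) \<in> borel_measurable borel"
  using linf_dist_meas[of z] by (simp add: linf_dist_sym)

locale est = gm +
  fixes x :: "real^'n" and L t \<gamma> \<alpha> lam Cs K :: real and i r :: nat
    and J :: "nat \<Rightarrow> (real^'n) set" and bf :: "real^'n \<Rightarrow> complex"
    and s :: "real^'n \<Rightarrow> real^'n \<Rightarrow> complex"
  assumes Jmeas [measurable]: "\<And>j. J j \<in> sets borel"
    and Jmono: "\<And>j j'. j \<le> j' \<Longrightarrow> J j \<subseteq> J j'"
    and far: "\<And>j z. r \<le> j \<Longrightarrow> z \<notin> J j \<Longrightarrow> L * 2 powr (real j * (1-\<gamma>)) < linf_dist x z"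
    and cover: "\<And>z. \<exists>j. z \<in> J j"
    and mass: "\<And>j. i \<le> j \<Longrightarrow> (\<integral>\<^sup>+ z. ennreal (cmod (bf z)) * indicator (J j) z \<partial>\<mu>) \<le> ennreal (K * (2 powr real j * L) powr m)"
    and bmeas [measurable]: "bf \<in> borel_measurable borel"
    and smeas [measurable]: "\<And>y. s y \<in> borel_measurable borel"
    and ssize: "\<And>y z. cmod (s y z) \<le> Cs * t powr \<alpha> / (t + linf_dist y z) powr (m+\<alpha>)"
    and Lpos: "0 < L" and tL: "L/2 < t" "t \<le> L"
    and alpha: "0 < \<alpha>" "\<alpha> \<le> m*(lam-2)/2" and lam: "2 < lam"
    and gam: "0 < \<gamma>" "\<gamma> < 1/2" "\<gamma> \<le> \<alpha>/(2*(m+\<alpha>))"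
    and ri: "r + 1 \<le> i" "1 \<le> r"
    and Knn: "0 \<le> K"
begin

definition "kk y z = Cs * t powr \<alpha> / (t + linf_dist y z) powr (m+\<alpha>)"
definition "f z = (if z \<in> J (i-1) then 0 else bf z)"
definition "ww y = (t / (t + linf_dist x y)) powr (m*lam) / t powr m"

lemma tpos: "0 < t" using tL Lpos by simp

lemma Cs_nonneg: "0 \<le> Cs"
proof -
  have "0 \<le> Cs * t powr \<alpha> / (t + linf_dist x x) powr (m+\<alpha>)" using ssize[of x x] norm_ge_zero order_trans by blast
  moreover have "0 < t powr \<alpha>" "0 < (t + linf_dist x x) powr (m+\<alpha>)" using tpos by simp_all
  ultimately show ?thesis by (simp add: zero_le_divide_iff zero_le_mult_iff)
qed

lemma kk_nonneg: "0 \<le> kk y z"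
  unfolding kk_def using Cs_nonneg by simp

lemma linf_dist_meas_pair2 [measurable]:
  "(\<lambda>p::(real^'n)\<times>(real^'n). linf_dist (fst p) (snd p)) \<in> borel_measurable (borel \<Otimes>\<^sub>M borel)"
  unfolding borel_prod by (rule linf_dist_meas_pair)

lemma kk_meas0: "(\<lambda>p. kk (fst p) (snd p)) \<in> borel_measurable borel"
  unfolding kk_def by measurable

lemma kk_meas [measurable]: "(\<lambda>p. kk (fst p) (snd p)) \<in> borel_measurable (borel \<Otimes>\<^sub>M borel)"
  unfolding borel_prod by (rule kk_meas0)

lemma kk_meas2 [measurable]: "kk y \<in> borel_measurable borel"
  unfolding kk_def by measurable

lemma kk_meas3 [measurable]: "(\<lambda>y. kk y z) \<in> borel_measurable borel"
  unfolding kk_def by measurable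

lemma f_meas [measurable]: "f \<in> borel_measurable borel"
  unfolding f_def by measurable

lemma ww_meas [measurable]: "ww \<in> borel_measurable borel"
  unfolding ww_def by measurable

lemma pair_meas:
  fixes g :: "(real^'n) \<times> (real^'n) \<Rightarrow> ennreal"
  shows "g \<in> borel_measurable (borel \<Otimes>\<^sub>M borel) \<Longrightarrow> g \<in> borel_measurable (\<mu> \<Otimes>\<^sub>M \<mu>)"
proof -
  assume g: "g \<in> borel_measurable (borel \<Otimes>\<^sub>M borel)"
  have "sets (\<mu> \<Otimes>\<^sub>M \<mu>) = sets (borel \<Otimes>\<^sub>M borel)" by (rule sets_pair_measure_cong[OF sets_eq sets_eq])
  hence "measurable (\<mu> \<Otimes>\<^sub>M \<mu>) (borel :: ennreal measure) = measurable (borel \<Otimes>\<^sub>M borel) borel"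
    by (intro measurable_cong_sets) auto
  with g show ?thesis by simp
qed

lemma mu_meas: "g \<in> borel_measurable borel \<Longrightarrow> g \<in> borel_measurable \<mu>"
  using meas_eq by simp

definition "Pn j y = (\<integral>\<^sup>+ z. ennreal (kk y z) * ennreal (cmod (bf z)) * indicator (J j) z \<partial>\<mu>)"

lemma Pn_meas: "Pn j \<in> borel_measurable \<mu>"
proof -
  interpret sigma_finite_measure \<mu> by (rule sigma_fin)
  have "(\<lambda>p. ennreal (kk (fst p) (snd p)) * ennreal (cmod (bf (snd p))) * indicator (J j) (snd p)) \<in> borel_measurable (\<mu> \<Otimes>\<^sub>M \<mu>)"
    by (rule pair_meas) measurable
  then show ?thesis unfolding Pn_def
    by (intro borel_measurable_nn_integral) (simp add: split_beta')
qed

lemma kernel_y_integral: "(\<integral>\<^sup>+ y. ennreal (kk y z) \<partial>\<mu>) \<le> ennreal (Cs * KI (m+\<alpha>))"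
proof -
  have eq: "kk y z = Cs * t powr (-m) * (t / (t + linf_dist z y)) powr (m+\<alpha>)" for y
  proof -
    have p: "0 < t + linf_dist y z" using tpos linf_dist_nonneg[of y z] by simp
    have "(t / (t + linf_dist z y)) powr (m+\<alpha>) = t powr (m+\<alpha>) / (t + linf_dist y z) powr (m+\<alpha>)"
      using p tpos by (simp add: powr_divide linf_dist_sym)
    moreover have "t powr (-m) * t powr (m+\<alpha>) = t powr \<alpha>" by (simp add: powr_add[symmetric])
    ultimately show ?thesis unfolding kk_def by (simp add: field_simps)
  qed
  have "(\<integral>\<^sup>+ y. ennreal (kk y z) \<partial>\<mu>) = (\<integral>\<^sup>+ y. ennreal (Cs * t powr (-m)) * ennreal ((t / (t + linf_dist z y)) powr (m+\<alpha>)) \<partial>\<mu>)"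
    unfolding eq using Cs_nonneg by (simp add: ennreal_mult)
  also have "\<dots> = ennreal (Cs * t powr (-m)) * (\<integral>\<^sup>+ y. ennreal ((t / (t + linf_dist z y)) powr (m+\<alpha>)) \<partial>\<mu>)"
    by (rule nn_integral_cmult) (simp add: meas_eq)
  also have "\<dots> \<le> ennreal (Cs * t powr (-m)) * ennreal (KI (m+\<alpha>) * t powr m)"
    by (rule mult_left_mono[OF kernel_integral]) (use tpos alpha in auto)
  also have "\<dots> = ennreal (Cs * KI (m+\<alpha>))"
    using Cs_nonneg KI_nonneg[of "m+\<alpha>"] alpha tpos
    by (simp add: ennreal_mult'[symmetric] powr_minus field_simps)
  finally show ?thesis .
qed

lemma Pn_integral: "(\<integral>\<^sup>+ y. Pn j y \<partial>\<mu>) \<le> ennreal (Cs * KI (m+\<alpha>)) * (\<integral>\<^sup>+ z. ennreal (cmod (bf z)) * indicator (J j) z \<partial>\<mu>)"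
proof -
  interpret pair_sigma_finite \<mu> \<mu> by (rule pair_sf)
  have jm: "case_prod (\<lambda>y z. ennreal (kk y z) * ennreal (cmod (bf z)) * indicator (J j) z) \<in> borel_measurable (\<mu> \<Otimes>\<^sub>M \<mu>)"
    unfolding case_prod_beta by (rule pair_meas) measurable
  have "(\<integral>\<^sup>+ y. Pn j y \<partial>\<mu>) = (\<integral>\<^sup>+ z. (\<integral>\<^sup>+ y. ennreal (kk y z) * ennreal (cmod (bf z)) * indicator (J j) z \<partial>\<mu>) \<partial>\<mu>)"
    unfolding Pn_def by (rule Fubini'[OF jm, symmetric])
  also have "\<dots> = (\<integral>\<^sup>+ z. (\<integral>\<^sup>+ y. ennreal (kk y z) \<partial>\<mu>) * (ennreal (cmod (bf z)) * indicator (J j) z) \<partial>\<mu>)"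
    by (intro nn_integral_cong, subst nn_integral_multc[symmetric]) (auto simp: meas_eq mult.assoc)
  also have "\<dots> \<le> (\<integral>\<^sup>+ z. ennreal (Cs * KI (m+\<alpha>)) * (ennreal (cmod (bf z)) * indicator (J j) z) \<partial>\<mu>)"
    by (intro nn_integral_mono mult_right_mono kernel_y_integral) simp
  also have "\<dots> = ennreal (Cs * KI (m+\<alpha>)) * (\<integral>\<^sup>+ z. ennreal (cmod (bf z)) * indicator (J j) z \<partial>\<mu>)"
    by (rule nn_integral_cmult) (simp add: meas_eq)
  finally show ?thesis .
qed

end



context est
begin

lemma dpos: "0 \<le> linf_dist a b" by (rule linf_dist_nonneg)

lemma kk_le: "kk y z \<le> Cs * t powr (-m)"
proof -
  have "t powr (m+\<alpha>) \<le> (t + linf_dist y z) powr (m+\<alpha>)"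
    using tpos dpos[of y z] alpha m_pos by (intro powr_mono2) auto
  moreover have "0 < (t + linf_dist y z) powr (m+\<alpha>) * t powr (m+\<alpha>)"
    using tpos dpos[of y z] by (intro mult_pos_pos) auto
  ultimately have "Cs * t powr \<alpha> / (t + linf_dist y z) powr (m+\<alpha>) \<le> Cs * t powr \<alpha> / t powr (m+\<alpha>)"
    using tpos Cs_nonneg by (intro divide_left_mono) auto
  also have "Cs * t powr \<alpha> / t powr (m+\<alpha>) = Cs * t powr (-m)"
    using tpos by (simp add: powr_add powr_minus field_simps)
  finally show ?thesis unfolding kk_def .
qed

lemma theta_bound:
  "ennreal (cmod (LINT z|\<mu>. s y z * f z)) \<le> (\<integral>\<^sup>+ z. ennreal (kk y z) * ennreal (cmod (f z)) \<partial>\<mu>)"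
proof (cases "integrable \<mu> (\<lambda>z. s y z * f z)")
  case True
  have "ennreal (cmod (LINT z|\<mu>. s y z * f z)) \<le> (\<integral>\<^sup>+ z. ennreal (norm (s y z * f z)) \<partial>\<mu>)"
    using integral_norm_bound_ennreal[OF True] by simp
  also have "\<dots> \<le> (\<integral>\<^sup>+ z. ennreal (kk y z) * ennreal (cmod (f z)) \<partial>\<mu>)"
  proof (rule nn_integral_mono)
    fix z
    have "norm (s y z * f z) = cmod (s y z) * cmod (f z)" by (simp add: norm_mult)
    also have "\<dots> \<le> kk y z * cmod (f z)" unfolding kk_def by (intro mult_right_mono ssize) simp
    finally have "norm (s y z * f z) \<le> kk y z * cmod (f z)" .
    hence "ennreal (norm (s y z * f z)) \<le> ennreal (kk y z * cmod (f z))" by (rule ennreal_leI)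
    also have "\<dots> = ennreal (kk y z) * ennreal (cmod (f z))" using kk_nonneg by (intro ennreal_mult) auto
    finally show "ennreal (norm (s y z * f z)) \<le> ennreal (kk y z) * ennreal (cmod (f z))" .
  qed
  finally show ?thesis .
next
  case False
  then show ?thesis by (simp add: not_integrable_integral_eq)
qed

definition "g1 z = ennreal (Cs * 2 powr (m+\<alpha>) * (t powr \<alpha> / (t + linf_dist x z) powr (m+\<alpha>))) * ennreal (cmod (f z))"
definition "g2 y z = ennreal (kk y z) * ennreal (cmod (f z)) * indicator {z. linf_dist x z < 2 * linf_dist x y} z"

lemma g1_meas [measurable]: "g1 \<in> borel_measurable borel"
  unfolding g1_def by measurable

lemma g2_meas [measurable]: "g2 y \<in> borel_measurable borel"
  unfolding g2_def by measurable

lemma split_pt: "ennreal (kk y z) * ennreal (cmod (f z)) \<le> g1 z + g2 y z"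
proof (cases "linf_dist x z < 2 * linf_dist x y")
  case True
  then show ?thesis unfolding g2_def by simp
next
  case False
  have tri: "linf_dist x z \<le> linf_dist x y + linf_dist y z" by (rule linf_dist_triangle)
  have e2: "2 * (t + linf_dist y z) = 2 * t + 2 * linf_dist y z" by simp
  have le: "t + linf_dist x z \<le> 2 * (t + linf_dist y z)" unfolding e2 using False tri tpos dpos[of y z] by linarith
  have "(t + linf_dist x z) powr (m+\<alpha>) \<le> (2 * (t + linf_dist y z)) powr (m+\<alpha>)"
    using le tpos dpos[of x z] alpha m_pos by (intro powr_mono2) auto
  also have "\<dots> = 2 powr (m+\<alpha>) * (t + linf_dist y z) powr (m+\<alpha>)"
    by (rule powr_mult)
  finally have pw: "(t + linf_dist x z) powr (m+\<alpha>) \<le> 2 powr (m+\<alpha>) * (t + linf_dist y z) powr (m+\<alpha>)" .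
  have p1: "0 < (t + linf_dist x z) powr (m+\<alpha>)" using tpos dpos[of x z] by simp
  have p2: "0 < (t + linf_dist y z) powr (m+\<alpha>)" using tpos dpos[of y z] by simp
  have "kk y z = Cs * 2 powr (m+\<alpha>) * t powr \<alpha> / (2 powr (m+\<alpha>) * (t + linf_dist y z) powr (m+\<alpha>))"
    unfolding kk_def by simp
  also have "\<dots> \<le> Cs * 2 powr (m+\<alpha>) * t powr \<alpha> / (t + linf_dist x z) powr (m+\<alpha>)"
  proof (rule divide_left_mono)
    show "0 < 2 powr (m+\<alpha>) * (t + linf_dist y z) powr (m+\<alpha>) * (t + linf_dist x z) powr (m+\<alpha>)"
      using p1 p2 by simp
  qed (use pw Cs_nonneg in auto)
  finally have "kk y z \<le> Cs * 2 powr (m+\<alpha>) * (t powr \<alpha> / (t + linf_dist x z) powr (m+\<alpha>))" by simp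
  hence "ennreal (kk y z) * ennreal (cmod (f z)) \<le> g1 z"
    unfolding g1_def by (intro mult_right_mono ennreal_leI) auto
  then show ?thesis by (simp add: add_increasing2)
qed

lemma Phi_split: "(\<integral>\<^sup>+ z. ennreal (kk y z) * ennreal (cmod (f z)) \<partial>\<mu>) \<le> (\<integral>\<^sup>+ z. g1 z \<partial>\<mu>) + (\<integral>\<^sup>+ z. g2 y z \<partial>\<mu>)"
proof -
  have "(\<integral>\<^sup>+ z. ennreal (kk y z) * ennreal (cmod (f z)) \<partial>\<mu>) \<le> (\<integral>\<^sup>+ z. g1 z + g2 y z \<partial>\<mu>)"
    by (intro nn_integral_mono split_pt)
  also have "\<dots> = (\<integral>\<^sup>+ z. g1 z \<partial>\<mu>) + (\<integral>\<^sup>+ z. g2 y z \<partial>\<mu>)"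
    by (rule nn_integral_add) (simp_all add: meas_eq)
  finally show ?thesis .
qed

end



context est
begin

definition "eps = (1-\<gamma>)*(m+\<alpha>) - m"

lemma eps_ge: "\<alpha>/2 \<le> eps"
proof -
  have mp: "0 < m + \<alpha>" using m_pos alpha by simp
  have "\<gamma> * (m+\<alpha>) \<le> \<alpha>/(2*(m+\<alpha>)) * (m+\<alpha>)" using gam(3) mp by (intro mult_right_mono) auto
  also have "\<dots> = \<alpha>/2" using mp by (simp add: field_simps)
  finally show ?thesis unfolding eps_def by (simp add: algebra_simps)
qed

lemma eps_pos: "0 < eps" using eps_ge alpha by simp

definition "cl l = Cs * 2 powr (m+\<alpha>) * (L powr (-m) * 2 powr (-(real (i+l) - 1)*(1-\<gamma>)*(m+\<alpha>)))"

lemma ratio_far: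
  assumes "L * 2 powr (real n' * (1-\<gamma>)) < linf_dist x z"
  shows "t powr \<alpha> / (t + linf_dist x z) powr (m+\<alpha>) \<le> L powr (-m) * 2 powr (-(real n')*(1-\<gamma>)*(m+\<alpha>))"
proof -
  define \<rho> where "\<rho> = L * 2 powr (real n' * (1-\<gamma>))"
  have rp: "0 < \<rho>" unfolding \<rho>_def using Lpos by simp
  have mp: "0 < m + \<alpha>" using m_pos alpha by simp
  have "t powr \<alpha> / (t + linf_dist x z) powr (m+\<alpha>) \<le> L powr \<alpha> / \<rho> powr (m+\<alpha>)"
  proof (rule frac_le)
    show "t powr \<alpha> \<le> L powr \<alpha>" using tpos tL alpha by (intro powr_mono2) auto
    show "\<rho> powr (m+\<alpha>) \<le> (t + linf_dist x z) powr (m+\<alpha>)"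
      using assms tpos rp mp unfolding \<rho>_def[symmetric] by (intro powr_mono2) auto
  qed (use rp in auto)
  also have "\<rho> powr (m+\<alpha>) = L powr (m+\<alpha>) * 2 powr (real n' * (1-\<gamma>) * (m+\<alpha>))"
    unfolding \<rho>_def by (simp add: powr_mult powr_powr)
  also have "L powr \<alpha> / (L powr (m+\<alpha>) * 2 powr (real n' * (1-\<gamma>) * (m+\<alpha>)))
      = L powr (-m) * 2 powr (-(real n')*(1-\<gamma>)*(m+\<alpha>))"
  proof -
    have e1: "2 powr (-(real n')*(1-\<gamma>)*(m+\<alpha>)) = inverse (2 powr (real n' * (1-\<gamma>) * (m+\<alpha>)))"
      by (metis minus_mult_left powr_minus)
    have e2: "L powr \<alpha> / L powr (m+\<alpha>) = L powr (-m)"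
      using Lpos by (simp add: powr_add powr_minus field_simps)
    show ?thesis unfolding e1 e2[symmetric] by (simp add: field_simps)
  qed
  finally show ?thesis .
qed

lemma g1_pt: "g1 z \<le> (\<Sum>l. ennreal (cl l) * (ennreal (cmod (bf z)) * indicator (J (i+l)) z))"
proof (cases "z \<in> J (i-1)")
  case True then show ?thesis unfolding g1_def f_def by simp
next
  case False
  have ex: "\<exists>j. z \<in> J j" by (rule cover)
  define n where "n = (LEAST j. z \<in> J j)"
  have zn: "z \<in> J n" unfolding n_def by (rule LeastI_ex[OF ex])
  have ni: "i \<le> n"
  proof (rule ccontr)
    assume "\<not> i \<le> n"
    hence "J n \<subseteq> J (i-1)" by (intro Jmono) simp
    with zn False show False by blast
  qed
  have zn1: "z \<notin> J (n-1)"
  proof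
    assume "z \<in> J (n-1)"
    hence "n \<le> n - 1" unfolding n_def by (rule Least_le)
    thus False using ni ri by simp
  qed
  have rn: "r \<le> n - 1" using ni ri by simp
  have fz: "L * 2 powr (real (n-1) * (1-\<gamma>)) < linf_dist x z" by (rule far[OF rn zn1])
  define l where "l = n - i"
  have nl: "n = i + l" unfolding l_def using ni by simp
  have rl: "real (i+l) - 1 = real (n-1)" using nl ni ri by simp
  have "t powr \<alpha> / (t + linf_dist x z) powr (m+\<alpha>) \<le> L powr (-m) * 2 powr (-(real (n-1))*(1-\<gamma>)*(m+\<alpha>))"
    by (rule ratio_far[OF fz])
  hence "Cs * 2 powr (m+\<alpha>) * (t powr \<alpha> / (t + linf_dist x z) powr (m+\<alpha>)) \<le> cl l"
    unfolding cl_def rl using Cs_nonneg by (intro mult_left_mono) auto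
  hence "g1 z \<le> ennreal (cl l) * (ennreal (cmod (bf z)) * indicator (J (i+l)) z)"
    unfolding g1_def f_def using False zn nl by (auto intro!: mult_right_mono ennreal_leI)
  also have "\<dots> \<le> (\<Sum>l. ennreal (cl l) * (ennreal (cmod (bf z)) * indicator (J (i+l)) z))"
    by (rule ennreal_le_suminf)
  finally show ?thesis .
qed

definition "CG = Cs * 2 powr (m+\<alpha>) * K * 2 powr ((1-\<gamma>)*(m+\<alpha>)) / (1 - 2 powr (-eps))"

lemma cl_alg: "cl l * (K * (2 powr real (i+l) * L) powr m)
   = Cs * 2 powr (m+\<alpha>) * K * 2 powr ((1-\<gamma>)*(m+\<alpha>)) * 2 powr (- real (i+l) * eps)"
proof -
  have a: "(2 powr real (i+l) * L) powr m = 2 powr (real (i+l) * m) * L powr m"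
    by (simp add: powr_mult powr_powr)
  have b: "L powr (-m) * L powr m = 1" using Lpos by (simp add: powr_minus)
  have c: "2 powr (-(real (i+l) - 1)*(1-\<gamma>)*(m+\<alpha>)) * 2 powr (real (i+l) * m)
         = 2 powr ((1-\<gamma>)*(m+\<alpha>)) * 2 powr (- real (i+l) * eps)"
    unfolding eps_def by (simp add: powr_add[symmetric] algebra_simps)
  have "cl l * (K * (2 powr real (i+l) * L) powr m)
      = Cs * 2 powr (m+\<alpha>) * K * (L powr (-m) * L powr m) *
        (2 powr (-(real (i+l) - 1)*(1-\<gamma>)*(m+\<alpha>)) * 2 powr (real (i+l) * m))"
    unfolding cl_def a by (simp add: algebra_simps)
  also have "\<dots> = Cs * 2 powr (m+\<alpha>) * K * 2 powr ((1-\<gamma>)*(m+\<alpha>)) * 2 powr (- real (i+l) * eps)"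
    unfolding b c by simp
  finally show ?thesis .
qed

lemma G_bound: "(\<integral>\<^sup>+ z. g1 z \<partial>\<mu>) \<le> ennreal (CG * 2 powr (- \<alpha> * real i / 2))"
proof -
  define A where "A = Cs * 2 powr (m+\<alpha>) * K * 2 powr ((1-\<gamma>)*(m+\<alpha>))"
  have A: "0 \<le> A" unfolding A_def using Cs_nonneg Knn by simp
  let ?q = "2 powr (-eps)"
  have q: "0 < ?q" "?q < 1" using eps_pos by (auto intro: two_powr_neg)
  have "(\<integral>\<^sup>+ z. g1 z \<partial>\<mu>) \<le> (\<integral>\<^sup>+ z. (\<Sum>l. ennreal (cl l) * (ennreal (cmod (bf z)) * indicator (J (i+l)) z)) \<partial>\<mu>)"
    by (intro nn_integral_mono g1_pt)
  also have "\<dots> = (\<Sum>l. \<integral>\<^sup>+ z. ennreal (cl l) * (ennreal (cmod (bf z)) * indicator (J (i+l)) z) \<partial>\<mu>)"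
    by (rule nn_integral_suminf) (simp add: meas_eq)
  also have "\<dots> = (\<Sum>l. ennreal (cl l) * (\<integral>\<^sup>+ z. ennreal (cmod (bf z)) * indicator (J (i+l)) z \<partial>\<mu>))"
    by (intro suminf_cong nn_integral_cmult) (simp add: meas_eq)
  also have "\<dots> \<le> (\<Sum>l. ennreal (A * 2 powr (- \<alpha> * real i / 2) * ?q ^ l))"
  proof (intro suminf_le summableI)
    fix l
    have "ennreal (cl l) * (\<integral>\<^sup>+ z. ennreal (cmod (bf z)) * indicator (J (i+l)) z \<partial>\<mu>)
        \<le> ennreal (cl l) * ennreal (K * (2 powr real (i+l) * L) powr m)"
      by (rule mult_left_mono[OF mass]) simp_all
    also have "\<dots> = ennreal (cl l * (K * (2 powr real (i+l) * L) powr m))"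
      unfolding cl_def using Cs_nonneg by (simp add: ennreal_mult'[symmetric])
    also have "cl l * (K * (2 powr real (i+l) * L) powr m) = A * 2 powr (- real (i+l) * eps)"
      unfolding cl_alg A_def ..
    also have "A * 2 powr (- real (i+l) * eps) \<le> A * (2 powr (- \<alpha> * real i / 2) * ?q ^ l)"
    proof (rule mult_left_mono[OF _ A])
      have "2 powr (- real (i+l) * eps) = 2 powr (- real i * eps) * 2 powr (- real l * eps)"
        by (simp add: powr_add[symmetric] algebra_simps)
      also have "2 powr (- real l * eps) = ?q ^ l" by (simp add: powr_nat_power)
      also have "2 powr (- real i * eps) \<le> 2 powr (- \<alpha> * real i / 2)"
      proof (rule powr_mono)
        have "real i * (\<alpha>/2) \<le> real i * eps" using eps_ge by (intro mult_left_mono) auto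
        then show "- real i * eps \<le> - \<alpha> * real i / 2" by (simp add: algebra_simps)
      qed simp
      finally show "2 powr (- real (i+l) * eps) \<le> 2 powr (- \<alpha> * real i / 2) * ?q ^ l"
        using q by (simp add: mult_right_mono)
    qed
    finally show "ennreal (cl l) * (\<integral>\<^sup>+ z. ennreal (cmod (bf z)) * indicator (J (i+l)) z \<partial>\<mu>)
        \<le> ennreal (A * 2 powr (- \<alpha> * real i / 2) * ?q ^ l)"
      by (simp add: ennreal_leI mult.assoc)
  qed
  also have "\<dots> = ennreal (A * 2 powr (- \<alpha> * real i / 2) / (1 - ?q))"
    using A q by (intro geom_ennreal) auto
  also have "A * 2 powr (- \<alpha> * real i / 2) / (1 - ?q) = CG * 2 powr (- \<alpha> * real i / 2)"
    unfolding CG_def A_def by simp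
  finally show ?thesis .
qed

end



context est
begin

definition "rho j = L * 2 powr (real j * (1-\<gamma>))"
definition "band n = {y. rho n < 2 * linf_dist x y \<and> 2 * linf_dist x y \<le> rho (Suc n)}"
definition "Mn n = K * (2 powr real (Suc n) * L) powr m"
definition "Wn n = t powr (-m) * (2 * 2 powr (-(real n * (1-\<gamma>)))) powr (m*lam)"
definition "T l y = indicator (band (i-1+l)) y * ennreal (Wn (i-1+l) * (Cs * t powr (-m)) * Mn (i-1+l)) * Pn (Suc (i-1+l)) y"

lemma band_sets [measurable]: "band n \<in> sets borel"
  unfolding band_def by measurable

lemma T_meas [measurable]: "T l \<in> borel_measurable \<mu>"
proof -
  have "indicator (band (i-1+l)) \<in> borel_measurable \<mu>" by (simp add: meas_eq)
  then show ?thesis unfolding T_def using Pn_meas by measurable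
qed

lemma rho_pos: "0 < rho j" unfolding rho_def using Lpos by simp

lemma rho_mono: "j \<le> j' \<Longrightarrow> rho j \<le> rho j'"
  unfolding rho_def using Lpos gam by (intro mult_left_mono powr_mono mult_right_mono) auto

lemma rho_unb: "\<exists>n. D \<le> rho n"
proof -
  obtain n :: nat where n: "D / L < real n" using reals_Archimedean2 by blast
  define j where "j = nat \<lceil>real n / (1 - \<gamma>)\<rceil>"
  have "real n / (1 - \<gamma>) \<le> real j" unfolding j_def by linarith
  hence "real n \<le> real j * (1 - \<gamma>)" using gam by (simp add: field_simps)
  hence m: "2 powr real n \<le> 2 powr (real j * (1 - \<gamma>))" by (intro powr_mono) auto
  have "real n < real (2^n)" by (simp only: of_nat_less_iff less_exp)
  also have "real (2^n) = 2 powr real n" by (simp add: powr_realpow)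
  finally have "real n \<le> 2 powr (real j * (1 - \<gamma>))" using m by linarith
  hence nj: "real n * L \<le> 2 powr (real j * (1 - \<gamma>)) * L" using Lpos by (intro mult_right_mono) auto
  have "D < real n * L" using n Lpos by (simp add: field_simps)
  hence "D \<le> rho j" unfolding rho_def using nj by (simp add: mult.commute)
  then show ?thesis by blast
qed

lemma band_ex:
  assumes "rho (i-1) < 2 * linf_dist x y"
  shows "\<exists>n. i - 1 \<le> n \<and> y \<in> band n"
proof -
  let ?D = "2 * linf_dist x y"
  obtain n0 where "?D \<le> rho n0" using rho_unb by blast
  moreover have "rho n0 \<le> rho (Suc n0)" by (rule rho_mono) simp
  ultimately have ex: "\<exists>n. ?D \<le> rho (Suc n)" by (intro exI[of _ n0]) simp
  define n where "n = (LEAST n. ?D \<le> rho (Suc n))"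
  have n1: "?D \<le> rho (Suc n)" unfolding n_def by (rule LeastI_ex[OF ex])
  have n2: "i - 1 \<le> n"
  proof (rule ccontr)
    assume "\<not> i - 1 \<le> n"
    hence "rho (Suc n) \<le> rho (i-1)" by (intro rho_mono) simp
    with n1 assms show False by linarith
  qed
  have n3: "rho n < ?D"
  proof (cases "n = i - 1")
    case True then show ?thesis using assms by simp
  next
    case False
    then obtain n' where n': "n = Suc n'" using n2 by (cases n) auto
    have "\<not> ?D \<le> rho (Suc n')"
    proof
      assume "?D \<le> rho (Suc n')"
      hence "n \<le> n'" unfolding n_def by (rule Least_le)
      with n' show False by simp
    qed
    then show ?thesis using n' by simp
  qed
  show ?thesis using n1 n2 n3 unfolding band_def by blast
qed

lemma Phi2_zero:
  assumes "2 * linf_dist x y \<le> rho (i-1)"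
  shows "(\<integral>\<^sup>+ z. g2 y z \<partial>\<mu>) = 0"
proof -
  have "g2 y z = 0" for z
  proof (cases "z \<in> J (i-1)")
    case True then show ?thesis unfolding g2_def f_def by simp
  next
    case False
    have "r \<le> i - 1" using ri by simp
    from far[OF this False] have "rho (i-1) < linf_dist x z" unfolding rho_def .
    then show ?thesis unfolding g2_def using assms by simp
  qed
  then show ?thesis by simp
qed

lemma Phi2_band:
  assumes "i - 1 \<le> n" "y \<in> band n"
  shows "(\<integral>\<^sup>+ z. g2 y z \<partial>\<mu>) \<le> Pn (Suc n) y"
  unfolding Pn_def
proof (rule nn_integral_mono)
  fix z
  show "g2 y z \<le> ennreal (kk y z) * ennreal (cmod (bf z)) * indicator (J (Suc n)) z"
  proof (cases "linf_dist x z < 2 * linf_dist x y")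
    case False then show ?thesis unfolding g2_def by simp
  next
    case True
    have zJ: "z \<in> J (Suc n)"
    proof (rule ccontr)
      assume "z \<notin> J (Suc n)"
      moreover have "r \<le> Suc n" using assms ri by simp
      ultimately have "rho (Suc n) < linf_dist x z" using far unfolding rho_def by blast
      with True assms(2) show False unfolding band_def by simp
    qed
    have "cmod (f z) \<le> cmod (bf z)" unfolding f_def by simp
    hence "ennreal (cmod (f z)) \<le> ennreal (cmod (bf z))" by (rule ennreal_leI)
    then show ?thesis unfolding g2_def using True zJ by (simp add: mult_left_mono)
  qed
qed

lemma Pn_sup:
  assumes "i \<le> j"
  shows "Pn j y \<le> ennreal (Cs * t powr (-m) * (K * (2 powr real j * L) powr m))"
proof -
  have "Pn j y \<le> (\<integral>\<^sup>+ z. ennreal (Cs * t powr (-m)) * (ennreal (cmod (bf z)) * indicator (J j) z) \<partial>\<mu>)"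
    unfolding Pn_def by (intro nn_integral_mono) (auto simp: mult.assoc intro!: mult_right_mono ennreal_leI kk_le)
  also have "\<dots> = ennreal (Cs * t powr (-m)) * (\<integral>\<^sup>+ z. ennreal (cmod (bf z)) * indicator (J j) z \<partial>\<mu>)"
    by (rule nn_integral_cmult) (simp add: meas_eq)
  also have "\<dots> \<le> ennreal (Cs * t powr (-m)) * ennreal (K * (2 powr real j * L) powr m)"
    by (rule mult_left_mono[OF mass[OF assms]]) simp
  also have "\<dots> = ennreal (Cs * t powr (-m) * (K * (2 powr real j * L) powr m))"
    using Cs_nonneg by (simp add: ennreal_mult'[symmetric])
  finally show ?thesis .
qed

lemma ww_nonneg: "0 \<le> ww y" unfolding ww_def by simp

lemma ww_band:
  assumes "y \<in> band n"
  shows "ww y \<le> Wn n"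
proof -
  let ?d = "linf_dist x y"
  have b: "rho n < 2 * ?d" using assms unfolding band_def by simp
  have dp: "0 < ?d" using b rho_pos[of n] by simp
  have "t / (t + ?d) \<le> t / ?d" using tpos dp by (intro divide_left_mono) auto
  also have "\<dots> \<le> L / ?d" using tL dp by (intro divide_right_mono) auto
  also have "\<dots> \<le> L / (rho n / 2)" using b dp rho_pos[of n] Lpos by (intro divide_left_mono) auto
  also have "L / (rho n / 2) = 2 * 2 powr (-(real n * (1-\<gamma>)))"
    unfolding rho_def powr_minus using Lpos by (simp add: field_simps)
  finally have r: "t / (t + ?d) \<le> 2 * 2 powr (-(real n * (1-\<gamma>)))" .
  have "(t / (t + ?d)) powr (m*lam) \<le> (2 * 2 powr (-(real n * (1-\<gamma>)))) powr (m*lam)"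
    using r tpos dpos[of x y] m_pos lam by (intro powr_mono2) auto
  hence "(t / (t + ?d)) powr (m*lam) * t powr (-m) \<le> (2 * 2 powr (-(real n * (1-\<gamma>)))) powr (m*lam) * t powr (-m)"
    by (rule mult_right_mono) simp
  then show ?thesis unfolding ww_def Wn_def using tpos by (simp add: powr_minus divide_inverse mult.commute)
qed

lemma pt_main: "ennreal (ww y) * (\<integral>\<^sup>+ z. g2 y z \<partial>\<mu>)^2 \<le> (\<Sum>l. T l y)"
proof (cases "rho (i-1) < 2 * linf_dist x y")
  case False
  then show ?thesis using Phi2_zero[of y] by (simp add: power2_eq_square)
next
  case True
  obtain n where n: "i - 1 \<le> n" "y \<in> band n" using band_ex[OF True] by blast
  define l where "l = n - (i - 1)"
  have nl: "n = i - 1 + l" unfolding l_def using n by simp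
  have ij: "i \<le> Suc n" using n ri by simp
  let ?P = "(\<integral>\<^sup>+ z. g2 y z \<partial>\<mu>)"
  have P1: "?P \<le> Pn (Suc n) y" by (rule Phi2_band[OF n])
  have P2: "?P \<le> ennreal (Cs * t powr (-m) * Mn n)"
    using order_trans[OF P1 Pn_sup[OF ij]] unfolding Mn_def .
  have W: "ennreal (ww y) \<le> ennreal (Wn n)" by (rule ennreal_leI[OF ww_band[OF n(2)]])
  have "ennreal (ww y) * ?P^2 = ennreal (ww y) * ?P * ?P" by (simp add: power2_eq_square mult.assoc)
  also have "\<dots> \<le> ennreal (Wn n) * ennreal (Cs * t powr (-m) * Mn n) * Pn (Suc n) y"
    by (intro mult_mono W P2 P1) auto
  also have "\<dots> = T l y"
  proof -
    have w0: "0 \<le> Wn n" unfolding Wn_def by simp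
    then show ?thesis unfolding T_def nl[symmetric] using n(2)
      by (simp add: ennreal_mult'[OF w0] mult.assoc)
  qed
  also have "\<dots> \<le> (\<Sum>l. T l y)" by (rule ennreal_le_suminf)
  finally show ?thesis .
qed

end



context est
begin

definition "EE = m*((1-\<gamma>)*lam - 2)"
definition "qq = 2 powr (-EE)"
definition "A2 = Cs^2 * KI (m+\<alpha>) * K^2 * 2 powr (m*lam + 4*m + EE)"

lemma EE_ge: "\<alpha> \<le> EE"
proof -
  have lam2: "2 + 2*\<alpha>/m \<le> lam" using alpha m_pos by (simp add: field_simps)
  have g1: "0 \<le> 1 - \<gamma>" using gam by simp
  have "(1-\<gamma>)*(2 + 2*\<alpha>/m) \<le> (1-\<gamma>)*lam" using lam2 g1 by (rule mult_left_mono)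
  hence "m*((1-\<gamma>)*(2 + 2*\<alpha>/m)) \<le> m*((1-\<gamma>)*lam)" by (rule mult_left_mono) (use m_pos in auto)
  moreover have "m*((1-\<gamma>)*(2 + 2*\<alpha>/m)) = 2*m + 2*\<alpha> - 2*(\<gamma>*(m+\<alpha>))"
    using m_pos by (simp add: field_simps)
  moreover have "\<gamma> * (m+\<alpha>) \<le> \<alpha>/2"
  proof -
    have mp: "0 < m + \<alpha>" using m_pos alpha by simp
    have "\<gamma> * (m+\<alpha>) \<le> \<alpha>/(2*(m+\<alpha>)) * (m+\<alpha>)" using gam(3) mp by (intro mult_right_mono) auto
    also have "\<dots> = \<alpha>/2" using mp by (simp add: field_simps)
    finally show ?thesis .
  qed
  ultimately show ?thesis unfolding EE_def by (simp add: algebra_simps)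
qed

lemma EE_pos: "0 < EE" using EE_ge alpha by simp

lemma qq: "0 < qq" "qq < 1" unfolding qq_def using EE_pos by (auto intro: two_powr_neg)

lemma A2_nonneg: "0 \<le> A2" unfolding A2_def using KI_nonneg[of "m+\<alpha>"] alpha by simp

lemma T_alg:
  assumes nl: "n = i - 1 + l"
  shows "Wn n * (Cs * t powr (-m)) * Mn n * (Cs * KI (m+\<alpha>) * Mn n) \<le> A2 * 2 powr (- \<alpha> * real i) * qq ^ l"
proof -
  define N where "N = real n"
  define X where "X = t powr (-m) * L powr m"
  define c0 where "c0 = Cs^2 * KI (m+\<alpha>) * K^2"
  have c0: "0 \<le> c0" unfolding c0_def using KI_nonneg[of "m+\<alpha>"] alpha by simp
  have Wn_eq: "Wn n = t powr (-m) * (2 powr (m*lam) * 2 powr (-(N*(1-\<gamma>))*(m*lam)))"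
    unfolding Wn_def N_def by (simp add: powr_mult powr_powr)
  have Mn_eq: "Mn n = K * (2 powr ((N+1)*m) * L powr m)"
    unfolding Mn_def N_def by (simp add: powr_mult powr_powr add.commute)
  have lhs: "Wn n * (Cs * t powr (-m)) * Mn n * (Cs * KI (m+\<alpha>) * Mn n)
     = c0 * X^2 * (2 powr (m*lam) * 2 powr (-(N*(1-\<gamma>))*(m*lam)) * 2 powr ((N+1)*m) * 2 powr ((N+1)*m))"
    unfolding Wn_eq Mn_eq c0_def X_def by (simp add: algebra_simps power2_eq_square)
  have pw: "2 powr (m*lam) * 2 powr (-(N*(1-\<gamma>))*(m*lam)) * 2 powr ((N+1)*m) * 2 powr ((N+1)*m)
      = 2 powr (m*lam + 2*m) * 2 powr (-N*EE)"
    unfolding EE_def by (simp add: powr_add[symmetric] algebra_simps)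
  have X0: "0 \<le> X" unfolding X_def by simp
  have X2: "X \<le> 2 powr m"
  proof -
    have "X = L powr m / t powr m" unfolding X_def by (simp add: powr_minus divide_inverse mult.commute)
    also have "\<dots> = (L / t) powr m" using tpos Lpos by (simp add: powr_divide)
    also have "\<dots> \<le> 2 powr m" using tpos Lpos tL m_pos by (intro powr_mono2) (auto simp: field_simps)
    finally show ?thesis .
  qed
  have NE: "2 powr (-N*EE) \<le> 2 powr EE * 2 powr (- \<alpha> * real i) * qq ^ l"
  proof -
    have Ni: "N = real i - 1 + real l" unfolding N_def nl using ri by simp
    have "2 powr (-N*EE) = 2 powr EE * 2 powr (- real i * EE) * 2 powr (- real l * EE)"
      unfolding Ni by (simp add: powr_add[symmetric] algebra_simps)
    also have "2 powr (- real l * EE) = qq ^ l" unfolding qq_def by (simp add: powr_nat_power)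
    also have "2 powr (- real i * EE) \<le> 2 powr (- \<alpha> * real i)"
    proof (rule powr_mono)
      have "real i * \<alpha> \<le> real i * EE" using EE_ge by (intro mult_left_mono) auto
      then show "- real i * EE \<le> - \<alpha> * real i" by (simp add: algebra_simps)
    qed simp
    finally show ?thesis using qq by (simp add: mult_right_mono mult_left_mono)
  qed
  have "c0 * X^2 * (2 powr (m*lam + 2*m) * 2 powr (-N*EE))
      \<le> c0 * (2 powr m)^2 * (2 powr (m*lam + 2*m) * (2 powr EE * 2 powr (- \<alpha> * real i) * qq ^ l))"
    using c0 X0 X2 NE by (intro mult_mono power_mono) auto
  also have "\<dots> = A2 * 2 powr (- \<alpha> * real i) * qq ^ l"
    unfolding A2_def c0_def by (simp add: powr_add[symmetric] power2_eq_square algebra_simps)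
  finally show ?thesis unfolding lhs pw .
qed

lemma T_int: "(\<integral>\<^sup>+ y. T l y \<partial>\<mu>) \<le> ennreal (A2 * 2 powr (- \<alpha> * real i) * qq ^ l)"
proof -
  define n where "n = i - 1 + l"
  define c where "c = Wn n * (Cs * t powr (-m)) * Mn n"
  have c0: "0 \<le> c" unfolding c_def Wn_def Mn_def using Cs_nonneg Knn by simp
  have ij: "i \<le> Suc n" unfolding n_def using ri by simp
  have "(\<integral>\<^sup>+ y. T l y \<partial>\<mu>) \<le> (\<integral>\<^sup>+ y. ennreal c * Pn (Suc n) y \<partial>\<mu>)"
    unfolding T_def n_def[symmetric] c_def[symmetric]
    by (intro nn_integral_mono) (auto simp: indicator_def)
  also have "\<dots> = ennreal c * (\<integral>\<^sup>+ y. Pn (Suc n) y \<partial>\<mu>)"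
    by (rule nn_integral_cmult[OF Pn_meas])
  also have "\<dots> \<le> ennreal c * (ennreal (Cs * KI (m+\<alpha>)) * ennreal (Mn n))"
  proof (rule mult_left_mono)
    show "(\<integral>\<^sup>+ y. Pn (Suc n) y \<partial>\<mu>) \<le> ennreal (Cs * KI (m+\<alpha>)) * ennreal (Mn n)"
      using order_trans[OF Pn_integral mult_left_mono[OF mass[OF ij]]] unfolding Mn_def by simp
  qed simp
  also have "\<dots> = ennreal (c * (Cs * KI (m+\<alpha>) * Mn n))"
    using c0 Cs_nonneg KI_nonneg[of "m+\<alpha>"] alpha by (simp add: ennreal_mult'[symmetric] ennreal_mult''[symmetric])
  also have "\<dots> \<le> ennreal (A2 * 2 powr (- \<alpha> * real i) * qq ^ l)"
    unfolding c_def by (rule ennreal_leI, rule T_alg[OF n_def])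
  finally show ?thesis .
qed

lemma ww_int: "(\<integral>\<^sup>+ y. ennreal (ww y) \<partial>\<mu>) \<le> ennreal (KI (m*lam))"
proof -
  have "(\<integral>\<^sup>+ y. ennreal (ww y) \<partial>\<mu>) = (\<integral>\<^sup>+ y. ennreal (t powr (-m)) * ennreal ((t / (t + linf_dist x y)) powr (m*lam)) \<partial>\<mu>)"
    unfolding ww_def by (simp add: ennreal_mult'[symmetric] powr_minus divide_inverse mult.commute)
  also have "\<dots> = ennreal (t powr (-m)) * (\<integral>\<^sup>+ y. ennreal ((t / (t + linf_dist x y)) powr (m*lam)) \<partial>\<mu>)"
    by (rule nn_integral_cmult) (simp add: meas_eq)
  also have "\<dots> \<le> ennreal (t powr (-m)) * ennreal (KI (m*lam) * t powr m)"
    by (rule mult_left_mono[OF kernel_integral]) (use tpos m_pos lam in auto)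
  also have "\<dots> = ennreal (KI (m*lam))"
    using tpos by (simp add: ennreal_mult'[symmetric] powr_minus field_simps)
  finally show ?thesis .
qed

end



context est
begin

definition "Cfin = 2 * CG^2 * KI (m*lam) + 2 * (A2 / (1 - qq))"

lemma CG_nonneg: "0 \<le> CG"
proof -
  have "2 powr (-eps) < 1" using eps_pos by (intro two_powr_neg) simp
  then show ?thesis unfolding CG_def using Cs_nonneg Knn by simp
qed

lemma main_est:
  "(\<integral>\<^sup>+ y. ennreal ((cmod (LINT z|\<mu>. s y z * f z))\<^sup>2 * (t / (t + linf_dist x y)) powr (m * lam) / t powr m) \<partial>\<mu>)
     \<le> ennreal (Cfin * 2 powr (- \<alpha> * real i))"
proof -
  define G where "G = (\<integral>\<^sup>+ z. g1 z \<partial>\<mu>)"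
  let ?th = "\<lambda>y. LINT z|\<mu>. s y z * f z"
  have pt: "ennreal ((cmod (?th y))\<^sup>2 * (t / (t + linf_dist x y)) powr (m * lam) / t powr m)
       \<le> 2 * (ennreal (ww y) * G^2) + 2 * (\<Sum>l. T l y)" for y
  proof -
    have "ennreal ((cmod (?th y))\<^sup>2 * (t / (t + linf_dist x y)) powr (m * lam) / t powr m)
        = ennreal (ww y) * ennreal (cmod (?th y))^2"
      unfolding ww_def using ww_nonneg by (simp add: ennreal_mult'[symmetric] ennreal_power mult.commute)
    also have "\<dots> \<le> ennreal (ww y) * (G + (\<integral>\<^sup>+ z. g2 y z \<partial>\<mu>))^2"
    proof (rule mult_left_mono)
      have "ennreal (cmod (?th y)) \<le> G + (\<integral>\<^sup>+ z. g2 y z \<partial>\<mu>)"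
        unfolding G_def using theta_bound Phi_split by (rule order_trans)
      then show "ennreal (cmod (?th y))^2 \<le> (G + (\<integral>\<^sup>+ z. g2 y z \<partial>\<mu>))^2" by (rule power_mono) simp
    qed simp
    also have "\<dots> \<le> ennreal (ww y) * (2 * G^2 + 2 * (\<integral>\<^sup>+ z. g2 y z \<partial>\<mu>)^2)"
      by (rule mult_left_mono[OF ennreal_sq_sum]) simp
    also have "\<dots> = 2 * (ennreal (ww y) * G^2) + 2 * (ennreal (ww y) * (\<integral>\<^sup>+ z. g2 y z \<partial>\<mu>)^2)"
      by (simp add: algebra_simps)
    also have "\<dots> \<le> 2 * (ennreal (ww y) * G^2) + 2 * (\<Sum>l. T l y)"
      by (intro add_left_mono mult_left_mono pt_main) simp
    finally show ?thesis .
  qed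
  have "(\<integral>\<^sup>+ y. ennreal ((cmod (?th y))\<^sup>2 * (t / (t + linf_dist x y)) powr (m * lam) / t powr m) \<partial>\<mu>)
      \<le> (\<integral>\<^sup>+ y. 2 * (ennreal (ww y) * G^2) + 2 * (\<Sum>l. T l y) \<partial>\<mu>)"
    by (intro nn_integral_mono pt)
  also have "\<dots> = (\<integral>\<^sup>+ y. 2 * (ennreal (ww y) * G^2) \<partial>\<mu>) + (\<integral>\<^sup>+ y. 2 * (\<Sum>l. T l y) \<partial>\<mu>)"
    by (rule nn_integral_add) (simp_all add: meas_eq)
  also have "(\<integral>\<^sup>+ y. 2 * (ennreal (ww y) * G^2) \<partial>\<mu>) = 2 * ((\<integral>\<^sup>+ y. ennreal (ww y) \<partial>\<mu>) * G^2)"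
    by (simp add: nn_integral_cmult nn_integral_multc meas_eq)
  also have "(\<integral>\<^sup>+ y. 2 * (\<Sum>l. T l y) \<partial>\<mu>) = 2 * (\<Sum>l. \<integral>\<^sup>+ y. T l y \<partial>\<mu>)"
    by (simp add: nn_integral_cmult nn_integral_suminf)
  also have "2 * ((\<integral>\<^sup>+ y. ennreal (ww y) \<partial>\<mu>) * G^2) + 2 * (\<Sum>l. \<integral>\<^sup>+ y. T l y \<partial>\<mu>)
      \<le> 2 * (ennreal (KI (m*lam)) * ennreal (CG * 2 powr (- \<alpha> * real i / 2))^2)
        + 2 * (\<Sum>l. ennreal (A2 * 2 powr (- \<alpha> * real i) * qq ^ l))"
  proof (intro add_mono mult_left_mono mult_mono power_mono suminf_le summableI)
    show "(\<integral>\<^sup>+ y. ennreal (ww y) \<partial>\<mu>) \<le> ennreal (KI (m*lam))" by (rule ww_int)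
    show "G \<le> ennreal (CG * 2 powr (- \<alpha> * real i / 2))" unfolding G_def by (rule G_bound)
    show "\<And>l. (\<integral>\<^sup>+ y. T l y \<partial>\<mu>) \<le> ennreal (A2 * 2 powr (- \<alpha> * real i) * qq ^ l)" by (rule T_int)
  qed simp_all
  also have "\<dots> = ennreal (Cfin * 2 powr (- \<alpha> * real i))"
  proof -
    have k: "0 \<le> KI (m*lam)" using KI_nonneg[of "m*lam"] m_pos lam by simp
    have sq: "ennreal (CG * 2 powr (- \<alpha> * real i / 2))^2 = ennreal (CG^2 * 2 powr (- \<alpha> * real i))"
    proof -
      have "(CG * 2 powr (- \<alpha> * real i / 2))^2 = CG^2 * 2 powr (- \<alpha> * real i)"
        by (simp add: power_mult_distrib powr_nat_power[symmetric, where k=2, simplified] power2_eq_square powr_add[symmetric])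
      then show ?thesis using CG_nonneg by (simp add: ennreal_power)
    qed
    have geo: "(\<Sum>l. ennreal (A2 * 2 powr (- \<alpha> * real i) * qq ^ l)) = ennreal (A2 * 2 powr (- \<alpha> * real i) / (1 - qq))"
      using A2_nonneg qq by (intro geom_ennreal) auto
    have c1: "0 \<le> CG^2 * 2 powr (- \<alpha> * real i)" by simp
    have c2: "0 \<le> A2 * 2 powr (- \<alpha> * real i) / (1 - qq)" using A2_nonneg qq by simp
    define a where "a = KI (m*lam) * (CG^2 * 2 powr (- \<alpha> * real i))"
    define b where "b = A2 * 2 powr (- \<alpha> * real i) / (1 - qq)"
    have a0: "0 \<le> a" unfolding a_def using k c1 by simp
    have b0: "0 \<le> b" unfolding b_def using c2 .
    have e1: "ennreal (KI (m*lam)) * ennreal (CG^2 * 2 powr (- \<alpha> * real i)) = ennreal a"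
      unfolding a_def using k c1 by (simp add: ennreal_mult)
    have e2: "2 * ennreal a + 2 * ennreal b = ennreal (2*a + 2*b)"
      using a0 b0 by (simp add: ennreal_mult)
    have e3: "2*a + 2*b = Cfin * 2 powr (- \<alpha> * real i)"
      unfolding a_def b_def Cfin_def by (simp add: algebra_simps)
    show ?thesis unfolding sq geo e1 b_def[symmetric] e2 e3 ..
  qed
  finally show ?thesis unfolding f_def .
qed

end



definition K1c :: "real \<Rightarrow> real \<Rightarrow> real" where
  "K1c A p = max 0 (max A (2 powr (p/(p-1)+1) * A powr (p/(p-1))))"

lemma K1c_nonneg: "0 \<le> K1c A p" unfolding K1c_def by simp

context gm
begin

lemma lp_to_l1:
  assumes g: "g \<in> borel_measurable \<mu>" and P: "P \<in> sets \<mu>" and p: "1 \<le> p" and K: "0 \<le> K1"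
    and Lp: "(\<integral>\<^sup>+ z. ennreal (cmod (g z) powr p) * indicator P z \<partial>\<mu>) \<le> ennreal K1 * emeasure \<mu> P"
  shows "(\<integral>\<^sup>+ z. ennreal (cmod (g z)) * indicator P z \<partial>\<mu>) \<le> ennreal (1 + K1) * emeasure \<mu> P"
proof -
  have pt: "ennreal (cmod (g z)) * indicator P z \<le> indicator P z + ennreal (cmod (g z) powr p) * indicator P z" for z
  proof -
    have "cmod (g z) \<le> 1 + cmod (g z) powr p"
    proof (cases "cmod (g z) \<le> 1")
      case True then show ?thesis using powr_ge_zero[of "cmod (g z)" p] by linarith
    next
      case False
      hence "cmod (g z) powr 1 \<le> cmod (g z) powr p" using p by (intro powr_mono) auto
      then show ?thesis using False by simp
    qed
    hence "ennreal (cmod (g z)) \<le> 1 + ennreal (cmod (g z) powr p)"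
      by (metis ennreal_leI ennreal_plus ennreal_1 zero_le_one powr_ge_zero)
    then show ?thesis by (cases "z \<in> P") auto
  qed
  have "(\<integral>\<^sup>+ z. ennreal (cmod (g z)) * indicator P z \<partial>\<mu>)
      \<le> (\<integral>\<^sup>+ z. indicator P z + ennreal (cmod (g z) powr p) * indicator P z \<partial>\<mu>)"
    by (intro nn_integral_mono pt)
  also have "\<dots> = emeasure \<mu> P + (\<integral>\<^sup>+ z. ennreal (cmod (g z) powr p) * indicator P z \<partial>\<mu>)"
    using g P by (subst nn_integral_add) auto
  also have "\<dots> \<le> emeasure \<mu> P + ennreal K1 * emeasure \<mu> P" using Lp by (rule add_left_mono)
  also have "\<dots> = ennreal (1 + K1) * emeasure \<mu> P" using K by (simp add: distrib_right)
  finally show ?thesis .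
qed

lemma nonstop_Lp:
  assumes g: "g \<in> borel_measurable \<mu>" and P: "P \<in> sets \<mu>" and Pfin: "emeasure \<mu> P < \<infinity>"
    and Ifin: "(\<integral>\<^sup>+ z. ennreal (cmod (g z) powr p) * indicator P z \<partial>\<mu>) < \<infinity>"
    and avg: "avg \<mu> P (\<lambda>z. cmod (g z) powr p) \<le> B" and B: "0 \<le> B"
  shows "(\<integral>\<^sup>+ z. ennreal (cmod (g z) powr p) * indicator P z \<partial>\<mu>) \<le> ennreal B * emeasure \<mu> P"
proof (cases "measure \<mu> P = 0")
  case True
  hence "emeasure \<mu> P = 0" using Pfin emeasure_eq_ennreal_measure[of \<mu> P] by simp
  hence "P \<in> null_sets \<mu>" using P by auto
  then show ?thesis by (simp add: nn_integral_null_set)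
next
  case False
  let ?I = "(\<integral>\<^sup>+ z. ennreal (cmod (g z) powr p) * indicator P z \<partial>\<mu>)"
  have mp: "0 < measure \<mu> P" using False measure_nonneg[of \<mu> P] by linarith
  have "(LINT z:P|\<mu>. cmod (g z) powr p) = integral\<^sup>L \<mu> (\<lambda>z. indicator P z * cmod (g z) powr p)"
    unfolding set_lebesgue_integral_def by simp
  also have "\<dots> = enn2real (\<integral>\<^sup>+ z. ennreal (indicator P z * cmod (g z) powr p) \<partial>\<mu>)"
    using g P by (intro integral_eq_nn_integral) auto
  also have "(\<integral>\<^sup>+ z. ennreal (indicator P z * cmod (g z) powr p) \<partial>\<mu>) = ?I"
    by (intro nn_integral_cong) (auto simp: indicator_def)
  finally have li: "(LINT z:P|\<mu>. cmod (g z) powr p) = enn2real ?I" .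
  have "inverse (measure \<mu> P) * enn2real ?I \<le> B" using avg unfolding avg_def li by simp
  hence "enn2real ?I \<le> B * measure \<mu> P" using mp by (simp add: field_simps)
  hence "ennreal (enn2real ?I) \<le> ennreal (B * measure \<mu> P)" by (rule ennreal_leI)
  also have "ennreal (enn2real ?I) = ?I" using Ifin by (simp add: less_top[symmetric])
  also have "ennreal (B * measure \<mu> P) = ennreal B * emeasure \<mu> P"
    using B Pfin emeasure_eq_ennreal_measure[of \<mu> P] by (simp add: ennreal_mult less_top)
  finally show ?thesis .
qed

lemma grid_emeasure:
  assumes b01: "B01 \<beta>" and P: "P \<in> dy_grid \<beta>"
  shows "emeasure \<mu> P \<le> ennreal (C0 * side \<beta> P powr m)"
proof -
  obtain c where c: "P \<subseteq> linf_ball c (side \<beta> P)" using grid_ball[OF b01 P] by blast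
  have "emeasure \<mu> P \<le> emeasure \<mu> (linf_ball c (side \<beta> P))"
    using c by (rule emeasure_mono) (simp add: sets_eq)
  also have "\<dots> \<le> ennreal (C0 * side \<beta> P powr m)" by (rule growth0[OF grid_side_pos[OF b01 P]])
  finally show ?thesis .
qed

lemma mass_lemma:
  fixes b :: "(real^'n) set \<Rightarrow> real^'n \<Rightarrow> complex" and A p :: real
  assumes b01: "B01 \<beta>" and Qs: "Qs \<in> dy_grid \<beta>" and Q: "Q \<in> dy_grid \<beta>" "Q \<subseteq> Qs"
    and P: "P \<in> dy_grid \<beta>" "Q \<subseteq> P" and p: "1 < p"
    and b_meas: "\<And>Q. Q \<in> dy_grid \<beta> \<Longrightarrow> b Q \<in> borel_measurable \<mu>"
    and b_Lp: "\<And>Q. Q \<in> dy_grid \<beta> \<Longrightarrow> (\<integral>\<^sup>+ z. ennreal (cmod (b Q z) powr p) \<partial>\<mu>) \<le> ennreal (A * measure \<mu> Q)"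
  shows "(\<integral>\<^sup>+ z. ennreal (cmod (b (stop_parent \<mu> \<beta> b A p Qs Q) z)) * indicator P z \<partial>\<mu>)
      \<le> ennreal ((1 + K1c A p) * (C0 * side \<beta> P powr m))"
proof -
  define F where "F = stop_parent \<mu> \<beta> b A p Qs Q"
  have Fp: "F \<in> stop_family \<mu> \<beta> b A p Qs" "Q \<subseteq> F"
    using stop_parent_props[OF b01 Qs Q] unfolding F_def by blast+
  have Fg: "F \<in> dy_grid \<beta>" by (rule stop_family_grid[OF Qs Fp(1)])
  let ?g = "b F"
  let ?K = "K1c A p"
  have K: "0 \<le> ?K" by (rule K1c_nonneg)
  have g: "?g \<in> borel_measurable \<mu>" by (rule b_meas[OF Fg])
  have Ps: "P \<in> sets \<mu>" using grid_measurable[OF P(1)] sets_eq by simp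
  have Pfin: "emeasure \<mu> P < \<infinity>" using grid_emeasure[OF b01 P(1)] by (simp add: le_less_trans)
  have Ffin: "emeasure \<mu> F < \<infinity>" using grid_emeasure[OF b01 Fg] by (simp add: le_less_trans)
  have tot: "(\<integral>\<^sup>+ z. ennreal (cmod (?g z) powr p) \<partial>\<mu>) \<le> ennreal (A * measure \<mu> F)" by (rule b_Lp[OF Fg])
  have IP: "(\<integral>\<^sup>+ z. ennreal (cmod (?g z) powr p) * indicator P z \<partial>\<mu>) \<le> (\<integral>\<^sup>+ z. ennreal (cmod (?g z) powr p) \<partial>\<mu>)"
    by (intro nn_integral_mono) (auto simp: indicator_def)
  have Ifin: "(\<integral>\<^sup>+ z. ennreal (cmod (?g z) powr p) * indicator P z \<partial>\<mu>) < \<infinity>"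
    using order_trans[OF IP tot] by (simp add: le_less_trans)
  have comp: "P \<subseteq> F \<or> F \<subseteq> P"
    using grid_comparable[OF b01 P(1) Fg] Fp(2) P(2) grid_nonempty[OF Q(1)] by blast
  have Lp: "(\<integral>\<^sup>+ z. ennreal (cmod (?g z) powr p) * indicator P z \<partial>\<mu>) \<le> ennreal ?K * emeasure \<mu> P"
  proof (cases "F \<subseteq> P")
    case True
    have "(\<integral>\<^sup>+ z. ennreal (cmod (?g z) powr p) * indicator P z \<partial>\<mu>) \<le> ennreal (A * measure \<mu> F)"
      using IP tot by (rule order_trans)
    also have "\<dots> \<le> ennreal (?K * measure \<mu> F)"
      by (intro ennreal_leI mult_right_mono) (auto simp: K1c_def)
    also have "\<dots> = ennreal ?K * emeasure \<mu> F"
      using K Ffin emeasure_eq_ennreal_measure[of \<mu> F] by (simp add: ennreal_mult less_top)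
    also have "\<dots> \<le> ennreal ?K * emeasure \<mu> P"
      by (intro mult_left_mono emeasure_mono True Ps) simp
    finally show ?thesis .
  next
    case False
    hence PF: "P \<subset> F" using comp by blast
    have ns: "\<not> stop_cond \<mu> b A p F P"
      unfolding F_def by (rule stop_parent_nonstop[OF b01 Qs Q P(1) P(2) PF[unfolded F_def]])
    hence "avg \<mu> P (\<lambda>z. cmod (?g z) powr p) \<le> 2 powr (p/(p-1)+1) * A powr (p/(p-1))"
      unfolding stop_cond_def by simp
    also have "\<dots> \<le> ?K" unfolding K1c_def by simp
    finally have av: "avg \<mu> P (\<lambda>z. cmod (?g z) powr p) \<le> ?K" .
    show ?thesis by (rule nonstop_Lp[OF g Ps Pfin Ifin av K])
  qed
  have "(\<integral>\<^sup>+ z. ennreal (cmod (?g z)) * indicator P z \<partial>\<mu>) \<le> ennreal (1 + ?K) * emeasure \<mu> P"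
    by (rule lp_to_l1[OF g Ps _ K Lp]) (use p in simp)
  also have "\<dots> \<le> ennreal (1 + ?K) * ennreal (C0 * side \<beta> P powr m)"
    by (intro mult_left_mono grid_emeasure[OF b01 P(1)]) simp
  also have "\<dots> = ennreal ((1 + ?K) * (C0 * side \<beta> P powr m))"
    using K by (subst ennreal_mult') auto
  finally show ?thesis unfolding F_def .
qed

end



definition cfin_expr :: "real \<Rightarrow> real \<Rightarrow> real \<Rightarrow> real \<Rightarrow> real \<Rightarrow> real \<Rightarrow> real \<Rightarrow> real" where
  "cfin_expr C0 m Cs K \<alpha> \<gamma> lam =
    (let KI = (\<lambda>q. C0 * 2 powr m / (1 - 2 powr (m - q)));
         eps = (1-\<gamma>)*(m+\<alpha>) - m;
         CG = Cs * 2 powr (m+\<alpha>) * K * 2 powr ((1-\<gamma>)*(m+\<alpha>)) / (1 - 2 powr (-eps));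
         EE = m*((1-\<gamma>)*lam - 2);
         qq = 2 powr (-EE);
         A2 = Cs^2 * KI (m+\<alpha>) * K^2 * 2 powr (m*lam + 4*m + EE)
     in 2 * CG^2 * KI (m*lam) + 2 * (A2 / (1 - qq)))"

context est
begin

lemma Cfin_eq: "Cfin = cfin_expr C0 m Cs K \<alpha> \<gamma> lam"
  unfolding Cfin_def CG_def KI_def eps_def A2_def qq_def EE_def cfin_expr_def Let_def ..

lemma Cfin_nonneg: "0 \<le> Cfin"
proof -
  have "0 \<le> KI (m*lam)" using KI_nonneg[of "m*lam"] m_pos lam by simp
  moreover have "0 \<le> A2 / (1 - qq)" using A2_nonneg qq by simp
  ultimately show ?thesis unfolding Cfin_def by simp
qed

lemma main_est':
  "(\<integral>\<^sup>+ y. ennreal ((cmod (LINT z|\<mu>. s y z * (if z \<in> J (i-1) then 0 else bf z)))\<^sup>2 * (t / (t + linf_dist x y)) powr (m * lam) / t powr m) \<partial>\<mu>)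
     \<le> ennreal ((sqrt (cfin_expr C0 m Cs K \<alpha> \<gamma> lam) * 2 powr (- \<alpha> * real i / 2))\<^sup>2)"
proof -
  have "(sqrt (cfin_expr C0 m Cs K \<alpha> \<gamma> lam) * 2 powr (- \<alpha> * real i / 2))\<^sup>2 = Cfin * 2 powr (- \<alpha> * real i)"
  proof -
    have "(2 powr (- \<alpha> * real i / 2))\<^sup>2 = 2 powr (- \<alpha> * real i)"
      by (simp add: power2_eq_square powr_add[symmetric])
    then show ?thesis unfolding Cfin_eq[symmetric] using Cfin_nonneg by (simp add: power_mult_distrib)
  qed
  then show ?thesis using main_est unfolding f_def by simp
qed

end

theorem lemma4p4:
  fixes \<mu> :: "(real^'n) measure"
    and m C\<^sub>\<mu> C\<^sub>s lam \<alpha> \<gamma> p A :: real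
    and s :: "real \<Rightarrow> real^'n \<Rightarrow> real^'n \<Rightarrow> complex"
    and \<beta> :: "int \<Rightarrow> real^'n"
    and r :: nat and sc :: int
    and b :: "(real^'n) set \<Rightarrow> real^'n \<Rightarrow> complex"
    and Qs :: "(real^'n) set"
  assumes m_pos: "m > 0"
    and borel_meas: "sets \<mu> = sets borel"
    and growth: "\<And>x \<rho>. \<rho> > 0 \<Longrightarrow> emeasure \<mu> (linf_ball x \<rho>) \<le> ennreal (C\<^sub>\<mu> * \<rho> powr m)"
    and lam: "lam > 2"
    and alpha: "\<alpha> > 0" "\<alpha> \<le> m * (lam - 2) / 2"
    and s_meas: "\<And>t y. t > 0 \<Longrightarrow> s t y \<in> borel_measurable \<mu>"
    and s_size: "\<And>t x y. t > 0 \<Longrightarrow>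
        cmod (s t x y) \<le> C\<^sub>s * t powr \<alpha> / (t + linf_dist x y) powr (m + \<alpha>)"
    and s_hoelder: "\<And>t x y y'. t > 0 \<Longrightarrow> linf_dist y y' < t / 2 \<Longrightarrow>
        cmod (s t x y - s t x y') \<le> C\<^sub>s * linf_dist y y' powr \<alpha> / (t + linf_dist x y) powr (m + \<alpha>)"
    and beta01: "\<And>j i. \<beta> j $ i \<in> {0, 1}"
    and r_ge: "r \<ge> 1"
    and gamma: "0 < \<gamma>" "\<gamma> < 1/2" "\<gamma> \<le> \<alpha> / (2 * (m + \<alpha>))" "m * \<gamma> / (1 - \<gamma>) \<le> \<alpha> / 4"
    and p: "1 < p" "p \<le> 2"
    and b_meas: "\<And>Q. Q \<in> dy_grid \<beta> \<Longrightarrow> b Q \<in> borel_measurable \<mu>"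
    and b_supp: "\<And>Q z. Q \<in> dy_grid \<beta> \<Longrightarrow> z \<notin> Q \<Longrightarrow> b Q z = 0"
    and b_avg: "\<And>Q. Q \<in> dy_grid \<beta> \<Longrightarrow> measure \<mu> Q > 0 \<Longrightarrow> avg \<mu> Q (b Q) = 1"
    and b_Lp: "\<And>Q. Q \<in> dy_grid \<beta> \<Longrightarrow>
        (\<integral>\<^sup>+ z. ennreal (cmod (b Q z) powr p) \<partial>\<mu>) \<le> ennreal (A * measure \<mu> Q)"
    and Qs: "Qs \<in> dy_level_grid \<beta> sc"
  shows "\<exists>C. \<forall>R i x t.
     R \<in> dy_grid \<beta> \<and> dy_good \<beta> r \<gamma> R \<and> i \<ge> r + 1 \<and> dy_anc \<beta> R i \<subseteq> Qs \<and>
     x \<in> R \<and> side \<beta> R / 2 < t \<and> t \<le> side \<beta> R \<longrightarrow>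
     (\<integral>\<^sup>+ y. ennreal ((cmod (theta \<mu> s t
          (\<lambda>z. if z \<in> dy_anc \<beta> R (i - 1) then 0 else b (stop_parent \<mu> \<beta> b A p Qs (dy_anc \<beta> R i)) z) y))\<^sup>2
        * (t / (t + linf_dist x y)) powr (m * lam) / t powr m) \<partial>\<mu>)
     \<le> ennreal ((C * 2 powr (- \<alpha> * real i / 2))\<^sup>2)"
proof -
  have b01: "B01 \<beta>" unfolding B01_def using beta01 by blast
  interpret gm \<mu> C\<^sub>\<mu> m by unfold_locales (use borel_meas m_pos growth in auto)
  have Qsg: "Qs \<in> dy_grid \<beta>" using Qs unfolding dy_grid_def by blast
  define K where "K = (1 + K1c A p) * C0"
  have K0: "0 \<le> K" unfolding K_def using K1c_nonneg[of A p] C0_nonneg by simp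
  show ?thesis
  proof (intro exI[of _ "sqrt (cfin_expr C0 m C\<^sub>s K \<alpha> \<gamma> lam)"] allI impI, elim conjE)
    fix R i x t
    assume R: "R \<in> dy_grid \<beta>" and good: "dy_good \<beta> r \<gamma> R" and ri: "i \<ge> r + 1"
      and RQs: "dy_anc \<beta> R i \<subseteq> Qs" and x: "x \<in> R" and t1: "side \<beta> R / 2 < t" and t2: "t \<le> side \<beta> R"
    let ?L = "side \<beta> R"
    let ?J = "dy_anc \<beta> R"
    let ?F = "stop_parent \<mu> \<beta> b A p Qs (dy_anc \<beta> R i)"
    have Lpos: "0 < ?L" by (rule grid_side_pos[OF b01 R])
    have tpos: "0 < t" using t1 Lpos by simp
    have Jig: "?J i \<in> dy_grid \<beta>" by (rule grid_anc(1)[OF b01 R])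
    have Fg: "?F \<in> dy_grid \<beta>"
      using stop_parent_props[OF b01 Qsg Jig RQs] stop_family_grid[OF Qsg] by blast
    have g1: "\<gamma> < 1" using gamma by simp
    interpret est \<mu> C\<^sub>\<mu> m x ?L t \<gamma> \<alpha> lam C\<^sub>s K i r ?J "b ?F" "s t"
    proof unfold_locales
      show "\<And>j. ?J j \<in> sets borel" using grid_measurable[OF grid_anc(1)[OF b01 R]] .
      show "\<And>j j'. j \<le> j' \<Longrightarrow> ?J j \<subseteq> ?J j'" by (rule grid_anc_mono[OF b01 R])
      show "\<And>j z. r \<le> j \<Longrightarrow> z \<notin> ?J j \<Longrightarrow> ?L * 2 powr (real j * (1 - \<gamma>)) < linf_dist x z"
        using good_far[OF b01 R good _ x _ gamma(1) g1] by blast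
      show "\<And>z. \<exists>j. z \<in> ?J j" using good_cover[OF b01 R good x gamma(1) g1] by blast
      show "\<And>j. i \<le> j \<Longrightarrow> (\<integral>\<^sup>+ z. ennreal (cmod (b ?F z)) * indicator (?J j) z \<partial>\<mu>) \<le> ennreal (K * (2 powr real j * ?L) powr m)"
      proof -
        fix j assume ij: "i \<le> j"
        have "(\<integral>\<^sup>+ z. ennreal (cmod (b ?F z)) * indicator (?J j) z \<partial>\<mu>)
            \<le> ennreal ((1 + K1c A p) * (C0 * side \<beta> (?J j) powr m))"
          by (rule mass_lemma[OF b01 Qsg Jig RQs grid_anc(1)[OF b01 R] grid_anc_mono[OF b01 R ij] p(1) b_meas b_Lp])
        also have "(1 + K1c A p) * (C0 * side \<beta> (?J j) powr m) = K * (2 powr real j * ?L) powr m"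
          unfolding K_def grid_anc(4)[OF b01 R] by simp
        finally show "(\<integral>\<^sup>+ z. ennreal (cmod (b ?F z)) * indicator (?J j) z \<partial>\<mu>) \<le> ennreal (K * (2 powr real j * ?L) powr m)" .
      qed
      show "b ?F \<in> borel_measurable borel" using b_meas[OF Fg] meas_eq by simp
      show "\<And>y. s t y \<in> borel_measurable borel" using s_meas[OF tpos] meas_eq by simp
      show "\<And>y z. cmod (s t y z) \<le> C\<^sub>s * t powr \<alpha> / (t + linf_dist y z) powr (m + \<alpha>)"
        by (rule s_size[OF tpos])
    qed (use Lpos t1 t2 alpha lam gamma ri r_ge K0 in auto)
    show "(\<integral>\<^sup>+ y. ennreal ((cmod (theta \<mu> s t
          (\<lambda>z. if z \<in> dy_anc \<beta> R (i - 1) then 0 else b (stop_parent \<mu> \<beta> b A p Qs (dy_anc \<beta> R i)) z) y))\<^sup>2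
        * (t / (t + linf_dist x y)) powr (m * lam) / t powr m) \<partial>\<mu>)
     \<le> ennreal ((sqrt (cfin_expr C0 m C\<^sub>s K \<alpha> \<gamma> lam) * 2 powr (- \<alpha> * real i / 2))\<^sup>2)"
      using main_est' unfolding theta_def .
  qed
qed


end
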